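(* Let $n\ge 2$ be an integer, $k,c_b>0$, $\rho_0>0$, and let $\lambda_{1,0},\dots,\lambda_{n,0}$ be real numbers with $\lambda_{1,0}=\cdots=\lambda_{J,0}<\lambda_{J+1,0}\le\cdots\le\lambda_{n,0}$ for some integer $1\le J\le n$. Consider the system $$\lambda_i'=-\lambda_i^2+\frac{k}{n}(\rho-c_b)\ (i=1,\dots,n),\qquad \rho'=-\rho\lambda,\quad \lambda=\sum_{i=1}^n\lambda_i,\qquad \rho(0)=\rho_0,\ \lambda_i(0)=\lambda_{i,0},$$ suppose its maximal interval of existence is $[0,t_B)$ with $0<t_B<\infty$, let $u_i(t)=e^{\int_0^t\lambda_i(s)\,ds}$, and let $p,q$ satisfy $\lim_{t\to t_B^-}u_1'(t)u_n(t)=-p$, $\lim_{t\to t_B^-}u_1(t)u_n'(t)=q$. Suppose $p=q$. Then $\lim_{t\to t_B^-}u_1(t)u_n(t)^{\theta}=0$ for every $\theta\le1$; and for $\theta>1$, if $u_1u_n^{\theta}$ has a finite limit as $t\to t_B^-$, then this limit is $0$.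
   Context: Solutions are real-valued and continuously differentiable on $[0,t_B)$. It is known that the limits defining $p,q$ exist. *)

theory Defs
  imports "HOL-Analysis.Analysis"
begin

text \<open>A solution of the initial value problem on the interval [0,T):
  lam i (for i = 1..n) and rho are real-valued, differentiable on [0,T)
  (one-sided at 0) and satisfy the ODE system and initial conditions.
  (Continuity of the derivatives follows from the equations.)\<close>
definition is_solution ::
  "nat \<Rightarrow> real \<Rightarrow> real \<Rightarrow> real \<Rightarrow> (nat \<Rightarrow> real) \<Rightarrow> real
   \<Rightarrow> (nat \<Rightarrow> real \<Rightarrow> real) \<Rightarrow> (real \<Rightarrow> real) \<Rightarrow> bool" where
  "is_solution n k cb rho0 lam0 T lam rho \<longleftrightarrow>
     rho 0 = rho0 \<and> (\<forall>i\<in>{1..n}. lam i 0 = lam0 i) \<and>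
     (\<forall>t\<in>{0..<T}.
        (\<forall>i\<in>{1..n}. (lam i has_real_derivative
            (- ((lam i t) ^ 2) + k / real n * (rho t - cb))) (at t within {0..<T})) \<and>
        (rho has_real_derivative (- rho t * (\<Sum>i=1..n. lam i t))) (at t within {0..<T}))"

definition maximal_solution ::
  "nat \<Rightarrow> real \<Rightarrow> real \<Rightarrow> real \<Rightarrow> (nat \<Rightarrow> real) \<Rightarrow> real
   \<Rightarrow> (nat \<Rightarrow> real \<Rightarrow> real) \<Rightarrow> (real \<Rightarrow> real) \<Rightarrow> bool" where
  "maximal_solution n k cb rho0 lam0 tB lam rho \<longleftrightarrow>
     is_solution n k cb rho0 lam0 tB lam rho \<and>
     \<not> (\<exists>T > tB. \<exists>lam' rho'. is_solution n k cb rho0 lam0 T lam' rho')"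

end

theory Submission
  imports Defs "HOL-Analysis.Analysis"
begin

lemma ext_cont_bcontfun:
  fixes f :: "real \<Rightarrow> 'b::real_normed_vector"
  assumes "continuous_on {a..b} f" "a \<le> b"
  shows "ext_cont f a b \<in> bcontfun"
proof -
  have c: "continuous_on (cbox a b) f" using assms by simp
  have "continuous_on UNIV (\<lambda>x. f (clamp a b x))"
    by (rule clamp_continuous_on[OF c])
  moreover have "bounded (range (\<lambda>x. f (clamp a b x)))"
    by (intro clamp_bounded compact_imp_bounded compact_continuous_image c compact_cbox)
  ultimately show ?thesis by (simp add: bcontfun_def ext_cont_def)
qed

lemma clamp_real_in: "a \<le> b \<Longrightarrow> clamp a b (x::real) \<in> {a..b}"
  using clamp_in_interval[of a b x] by simp

lemma picard:
  fixes F :: "'a::banach \<Rightarrow> 'a" and x0 :: 'a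
  assumes r: "r > 0" and h: "h > 0" and K: "K \<ge> 0"
    and bnd: "\<And>x. x \<in> cball x0 r \<Longrightarrow> norm (F x) \<le> B"
    and lip: "\<And>x y. x \<in> cball x0 r \<Longrightarrow> y \<in> cball x0 r \<Longrightarrow> norm (F x - F y) \<le> K * norm (x - y)"
    and hB: "h * B \<le> r" and hK: "h * K \<le> 1/2"
  shows "\<exists>x. x t0 = x0 \<and> (\<forall>t\<in>{t0..t0+h}. x t \<in> cball x0 r \<and>
            (x has_vector_derivative F (x t)) (at t within {t0..t0+h}))"
proof -
  have B0: "B \<ge> 0" using bnd[of x0] r by (auto intro: order_trans[OF norm_ge_zero])
  have Fc: "continuous_on (cball x0 r) F"
  proof (rule continuous_onI)
    fix x e assume x: "x \<in> cball x0 r" and e: "(e::real) > 0"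
    show "\<exists>d>0. \<forall>x'\<in>cball x0 r. dist x' x < d \<longrightarrow> dist (F x') (F x) \<le> e"
    proof (intro exI[of _ "e / (K + 1)"] conjI ballI impI)
      show "e / (K+1) > 0" using e K by simp
      fix y assume y: "y \<in> cball x0 r" and d: "dist y x < e / (K+1)"
      have "dist (F y) (F x) \<le> K * dist y x" using lip[OF y x] by (simp add: dist_norm)
      also have "\<dots> \<le> (K+1) * dist y x" using K by (simp add: mult_right_mono)
      also have "\<dots> \<le> e" using d K by (simp add: field_simps)
      finally show "dist (F y) (F x) \<le> e" .
    qed
  qed
  define S :: "(real \<Rightarrow>\<^sub>C 'a) set" where "S = PiC UNIV (\<lambda>_. cball x0 r)"
  have Sclosed: "closed S" unfolding S_def by (rule closed_PiC) simp
  have Scomplete: "complete S" using Sclosed by (simp add: complete_eq_closed)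
  have gS: "apply_bcontfun g t \<in> cball x0 r" if "g \<in> S" for g t
    using that unfolding S_def by (auto dest!: mem_PiCD)
  have Sne: "S \<noteq> {}"
  proof -
    have "const_bcontfun x0 \<in> S" unfolding S_def
      by (intro mem_PiCI) (simp add: r less_imp_le)
    then show ?thesis by blast
  qed
  define I where "I g t = x0 + integral {t0..t} (\<lambda>s. F (apply_bcontfun g s))" for g :: "real \<Rightarrow>\<^sub>C 'a" and t
  have Fg_cont: "continuous_on A (\<lambda>s. F (apply_bcontfun g s))" if "g \<in> S" for g A
    by (rule continuous_on_compose2[OF Fc]) (auto intro: gS[OF that])
  have Ic: "continuous_on {t0..t0+h} (I g)" if "g \<in> S" for g
    unfolding I_def
    by (intro continuous_intros indefinite_integral_continuous_1 integrable_continuous_interval Fg_cont that)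
  have tle: "t0 \<le> t0 + h" using h by simp
  define \<Phi> where "\<Phi> g = Bcontfun (ext_cont (I g) t0 (t0+h))" for g
  have Phi_app: "apply_bcontfun (\<Phi> g) t = I g (clamp t0 (t0+h) t)" if "g \<in> S" for g t
    unfolding \<Phi>_def using ext_cont_bcontfun[OF Ic[OF that] tle]
    by (simp add: Bcontfun_inverse ext_cont_def)
  have intbound: "norm (integral {t0..c} f) \<le> C * h"
    if "c \<in> {t0..t0+h}" "continuous_on {t0..c} f" "\<And>s. s \<in> {t0..c} \<Longrightarrow> norm (f s) \<le> C" "C \<ge> 0"
    for c C and f :: "real \<Rightarrow> 'a"
  proof -
    have "norm (integral {t0..c} f) \<le> C * (c - t0)"
      by (rule integral_bound) (use that in auto)
    also have "\<dots> \<le> C * h" using that by (intro mult_left_mono) auto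
    finally show ?thesis .
  qed
  have self: "\<Phi> ` S \<subseteq> S"
  proof
    fix y assume "y \<in> \<Phi> ` S"
    then obtain g where g: "g \<in> S" and y: "y = \<Phi> g" by auto
    show "y \<in> S" unfolding S_def
    proof (rule mem_PiCI, rule Pi_I)
      fix t
      let ?c = "clamp t0 (t0+h) t"
      have c: "?c \<in> {t0..t0+h}" by (rule clamp_real_in[OF tle])
      have "norm (integral {t0..?c} (\<lambda>s. F (apply_bcontfun g s))) \<le> B * h"
        by (rule intbound[OF c Fg_cont[OF g]]) (auto intro: bnd gS[OF g] B0)
      also have "\<dots> \<le> r" using hB by (simp add: mult.commute)
      finally show "apply_bcontfun y t \<in> cball x0 r"
        by (simp add: y Phi_app[OF g] I_def dist_norm)
    qed
  qed
  have contr: "dist (\<Phi> g1) (\<Phi> g2) \<le> (1/2) * dist g1 g2" if g1: "g1 \<in> S" and g2: "g2 \<in> S" for g1 g2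
  proof (rule dist_bound)
    fix t
    let ?c = "clamp t0 (t0+h) t"
    have c: "?c \<in> {t0..t0+h}" by (rule clamp_real_in[OF tle])
    have i1: "(\<lambda>s. F (apply_bcontfun g1 s)) integrable_on {t0..?c}"
      by (intro integrable_continuous_interval Fg_cont g1)
    have i2: "(\<lambda>s. F (apply_bcontfun g2 s)) integrable_on {t0..?c}"
      by (intro integrable_continuous_interval Fg_cont g2)
    have "dist (\<Phi> g1 t) (\<Phi> g2 t) = norm (integral {t0..?c} (\<lambda>s. F (apply_bcontfun g1 s) - F (apply_bcontfun g2 s)))"
      by (simp add: Phi_app g1 g2 I_def dist_norm integral_diff[OF i1 i2])
    also have "\<dots> \<le> (K * dist g1 g2) * h"
    proof (rule intbound[OF c])
      show "continuous_on {t0..?c} (\<lambda>s. F (apply_bcontfun g1 s) - F (apply_bcontfun g2 s))"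
        by (intro continuous_intros Fg_cont g1 g2)
      show "K * dist g1 g2 \<ge> 0" using K by simp
      fix s
      have "norm (F (apply_bcontfun g1 s) - F (apply_bcontfun g2 s)) \<le> K * norm (apply_bcontfun g1 s - apply_bcontfun g2 s)"
        by (rule lip) (use gS[OF g1] gS[OF g2] in auto)
      also have "\<dots> \<le> K * dist g1 g2"
        using dist_bounded[of g1 s g2] K by (simp add: dist_norm mult_left_mono)
      finally show "norm (F (apply_bcontfun g1 s) - F (apply_bcontfun g2 s)) \<le> K * dist g1 g2" .
    qed
    also have "\<dots> \<le> (1/2) * dist g1 g2"
    proof -
      have "(K * dist g1 g2) * h = (h * K) * dist g1 g2" by simp
      also have "\<dots> \<le> (1/2) * dist g1 g2" using hK by (intro mult_right_mono) auto
      finally show ?thesis .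
    qed
    finally show "dist (\<Phi> g1 t) (\<Phi> g2 t) \<le> (1/2) * dist g1 g2" .
  qed
  obtain g where g: "g \<in> S" and gfix: "\<Phi> g = g"
    using Banach_fix[OF Scomplete Sne _ _ self contr] by auto
  have geq: "apply_bcontfun g t = I g t" if "t \<in> {t0..t0+h}" for t
  proof -
    have "apply_bcontfun g t = apply_bcontfun (\<Phi> g) t" by (simp add: gfix)
    also have "\<dots> = I g t" using that by (simp add: Phi_app[OF g])
    finally show ?thesis .
  qed
  show ?thesis
  proof (intro exI[of _ "apply_bcontfun g"] conjI ballI)
    show "apply_bcontfun g t0 = x0" using geq[of t0] h by (simp add: I_def)
    fix t assume t: "t \<in> {t0..t0+h}"
    show "apply_bcontfun g t \<in> cball x0 r" by (rule gS[OF g])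
    have "(I g has_vector_derivative F (apply_bcontfun g t)) (at t within {t0..t0+h})"
      unfolding I_def
      using has_vector_derivative_add[OF has_vector_derivative_const[of x0] integral_has_vector_derivative[OF Fg_cont[OF g] t]]
      by simp
    then show "(apply_bcontfun g has_vector_derivative F (apply_bcontfun g t)) (at t within {t0..t0+h})"
      by (rule has_vector_derivative_transform[OF t geq, rotated]) (simp add: geq)
  qed
qed

type_synonym st = "real \<times> real \<times> real \<times> real \<times> real"

definition Fx :: "nat \<Rightarrow> real \<Rightarrow> real \<Rightarrow> (nat \<Rightarrow> real) \<Rightarrow> st \<Rightarrow> st" where
  "Fx n k cb l X = (case X of (U,P,V,Q,R) \<Rightarrow>
     (P, k / real n * (R - cb) * U, Q, k / real n * (R - cb) * V,
      - R * (\<Sum>i=1..n. (P + l i * Q) / (U + l i * V))))"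

lemma norm5:
  fixes a b c d e :: real
  shows "\<bar>a\<bar> \<le> norm (a,b,c,d,e)" "\<bar>b\<bar> \<le> norm (a,b,c,d,e)" "\<bar>c\<bar> \<le> norm (a,b,c,d,e)"
    "\<bar>d\<bar> \<le> norm (a,b,c,d,e)" "\<bar>e\<bar> \<le> norm (a,b,c,d,e)"
    "norm (a,b,c,d,e) \<le> \<bar>a\<bar> + \<bar>b\<bar> + \<bar>c\<bar> + \<bar>d\<bar> + \<bar>e\<bar>"
proof -
  have s1: "norm (b,c,d,e) \<le> norm (a,b,c,d,e)" by (rule norm_snd_le)
  have s2: "norm (c,d,e) \<le> norm (b,c,d,e)" by (rule norm_snd_le)
  have s3: "norm (d,e) \<le> norm (c,d,e)" by (rule norm_snd_le)
  show "\<bar>a\<bar> \<le> norm (a,b,c,d,e)" using norm_fst_le[of a "(b,c,d,e)"] by simp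
  show "\<bar>b\<bar> \<le> norm (a,b,c,d,e)" using norm_fst_le[of b "(c,d,e)"] s1 by simp
  show "\<bar>c\<bar> \<le> norm (a,b,c,d,e)" using norm_fst_le[of c "(d,e)"] s1 s2 by simp
  show "\<bar>d\<bar> \<le> norm (a,b,c,d,e)" using norm_fst_le[of d e] s1 s2 s3 by simp
  show "\<bar>e\<bar> \<le> norm (a,b,c,d,e)" using norm_snd_le[of e d] s1 s2 s3 by simp
  have "norm (a,b,c,d,e) \<le> norm a + norm (b,c,d,e)" by (rule norm_Pair_le)
  also have "norm (b,c,d,e) \<le> norm b + norm (c,d,e)" by (rule norm_Pair_le)
  also have "norm (c,d,e) \<le> norm c + norm (d,e)" by (rule norm_Pair_le)
  also have "norm (d,e) \<le> norm d + norm e" by (rule norm_Pair_le)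
  finally show "norm (a,b,c,d,e) \<le> \<bar>a\<bar> + \<bar>b\<bar> + \<bar>c\<bar> + \<bar>d\<bar> + \<bar>e\<bar>" by simp
qed

lemma prod_lip:
  fixes x1 x2 y1 y2 A1 B2 c1 c2 d :: real
  assumes "\<bar>x1\<bar> \<le> A1" "\<bar>y2\<bar> \<le> B2" "\<bar>x1 - x2\<bar> \<le> c1 * d" "\<bar>y1 - y2\<bar> \<le> c2 * d"
  shows "\<bar>x1 * y1 - x2 * y2\<bar> \<le> (A1 * c2 + B2 * c1) * d"
proof -
  have "x1 * y1 - x2 * y2 = x1 * (y1 - y2) + y2 * (x1 - x2)" by (simp add: algebra_simps)
  moreover have "\<bar>x1 * (y1 - y2)\<bar> \<le> A1 * (c2 * d)"
    unfolding abs_mult using assms by (intro mult_mono) auto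
  moreover have "\<bar>y2 * (x1 - x2)\<bar> \<le> B2 * (c1 * d)"
    unfolding abs_mult using assms by (intro mult_mono) auto
  ultimately have "\<bar>x1 * y1 - x2 * y2\<bar> \<le> A1 * (c2 * d) + B2 * (c1 * d)"
    by (metis abs_triangle_ineq add_mono order_trans)
  then show ?thesis by (simp add: algebra_simps)
qed

lemma quot_lip:
  fixes N1 N2 D1 D2 c d N0 D0 :: real
  assumes D1: "D1 \<ge> 1/2" and D2: "D2 \<ge> 1/2" and N1: "\<bar>N1\<bar> \<le> N0" and D1b: "\<bar>D1\<bar> \<le> D0"
    and dN: "\<bar>N1 - N2\<bar> \<le> c * d" and dD: "\<bar>D1 - D2\<bar> \<le> c * d"
  shows "\<bar>N1 / D1 - N2 / D2\<bar> \<le> 4 * (N0 + D0) * (c * d)"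
proof -
  have nz: "D1 \<noteq> 0" "D2 \<noteq> 0" using D1 D2 by auto
  have eq: "N1 / D1 - N2 / D2 = (N1 * (D2 - D1) + D1 * (N1 - N2)) / (D1 * D2)"
    using nz by (simp add: divide_simps) (simp add: algebra_simps)
  have a1: "\<bar>N1 * (D2 - D1)\<bar> \<le> N0 * (c*d)"
  proof -
    have "\<bar>D2 - D1\<bar> \<le> c * d" using dD by (simp add: abs_minus_commute)
    then have "\<bar>N1\<bar> * \<bar>D2 - D1\<bar> \<le> N0 * (c*d)"
      using N1 by (intro mult_mono) auto
    then show ?thesis by (simp add: abs_mult)
  qed
  have a2: "\<bar>D1 * (N1 - N2)\<bar> \<le> D0 * (c*d)"
  proof -
    have "\<bar>D1\<bar> * \<bar>N1 - N2\<bar> \<le> D0 * (c*d)"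
      using D1b dN by (intro mult_mono) auto
    then show ?thesis by (simp add: abs_mult)
  qed
  have num: "\<bar>N1 * (D2 - D1) + D1 * (N1 - N2)\<bar> \<le> N0 * (c*d) + D0 * (c*d)"
    using abs_triangle_ineq[of "N1 * (D2 - D1)" "D1 * (N1 - N2)"] a1 a2 by linarith
  have den: "D1 * D2 \<ge> 1/4" using mult_mono[OF D1 D2] D1 by simp
  have "\<bar>N1 / D1 - N2 / D2\<bar> = \<bar>N1 * (D2 - D1) + D1 * (N1 - N2)\<bar> / (D1 * D2)"
    using den by (simp only: eq abs_divide)
  also have "\<dots> \<le> \<bar>N1 * (D2 - D1) + D1 * (N1 - N2)\<bar> / (1/4)"
    using den by (intro divide_left_mono) auto
  also have "\<dots> \<le> (N0 * (c*d) + D0 * (c*d)) / (1/4)"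
    using num by (intro divide_right_mono) auto
  finally show ?thesis by (simp add: algebra_simps)
qed

lemma gbounds:
  fixes U P V Q l M rr :: real
  assumes "\<bar>U - 1\<bar> \<le> rr" "\<bar>P\<bar> \<le> rr" "\<bar>V\<bar> \<le> rr" "\<bar>Q - 1\<bar> \<le> rr" "\<bar>l\<bar> \<le> M"
    "M \<ge> 0" "rr * (1 + M) = 1/2" "rr \<le> 1/2" "rr \<ge> 0"
  shows "U + l * V \<ge> 1/2" "\<bar>P + l * Q\<bar> \<le> 1 + 2*M" "\<bar>U + l * V\<bar> \<le> 2 + M"
proof -
  have lV: "\<bar>l * V\<bar> \<le> M * rr" unfolding abs_mult using assms by (intro mult_mono) auto
  have Q: "\<bar>Q\<bar> \<le> 3/2" using assms by linarith
  have lQ: "\<bar>l * Q\<bar> \<le> M * (3/2)" unfolding abs_mult using assms Q by (intro mult_mono) auto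
  have Mrr: "M * rr \<le> 1/2" using assms by (simp add: algebra_simps)
  show "U + l * V \<ge> 1/2" using assms lV by (simp add: algebra_simps abs_le_iff)
  show "\<bar>P + l * Q\<bar> \<le> 1 + 2*M" using assms lQ abs_triangle_ineq[of P "l*Q"] by linarith
  show "\<bar>U + l * V\<bar> \<le> 2 + M" using assms lV Mrr abs_triangle_ineq[of U "l*V"] by linarith
qed

lemma cball_comp:
  assumes "(U,P,V,Q,R) \<in> cball ((1,0,0,1,r0)::st) rr"
  shows "\<bar>U - 1\<bar> \<le> rr" "\<bar>P\<bar> \<le> rr" "\<bar>V\<bar> \<le> rr" "\<bar>Q - 1\<bar> \<le> rr" "\<bar>R - r0\<bar> \<le> rr"
proof -
  have "norm (1 - U, 0 - P, 0 - V, 1 - Q, r0 - R) \<le> rr"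
    using assms by (simp add: dist_norm)
  then show "\<bar>U - 1\<bar> \<le> rr" "\<bar>P\<bar> \<le> rr" "\<bar>V\<bar> \<le> rr" "\<bar>Q - 1\<bar> \<le> rr" "\<bar>R - r0\<bar> \<le> rr"
    using norm5[where a="1 - U" and b="0 - P" and c="0 - V" and d="1 - Q" and e="r0 - R"] by (auto simp: abs_minus_commute)
qed

lemma diff_comp:
  shows "\<bar>U1 - U2\<bar> \<le> norm ((U1,P1,V1,Q1,R1) - (U2,P2,V2,Q2,R2::real))"
    "\<bar>P1 - P2\<bar> \<le> norm ((U1,P1,V1,Q1,R1) - (U2,P2,V2,Q2,R2::real))"
    "\<bar>V1 - V2\<bar> \<le> norm ((U1,P1,V1,Q1,R1) - (U2,P2,V2,Q2,R2::real))"
    "\<bar>Q1 - Q2\<bar> \<le> norm ((U1,P1,V1,Q1,R1) - (U2,P2,V2,Q2,R2::real))"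
    "\<bar>R1 - R2\<bar> \<le> norm ((U1,P1,V1,Q1,R1) - (U2,P2,V2,Q2,R2::real))"
  using norm5[where a="U1 - U2" and b="P1 - P2" and c="V1 - V2" and d="Q1 - Q2" and e="R1 - R2"] by auto

lemma Fx_bounds:
  fixes M R r0 k cb :: real and n :: nat and l :: "nat \<Rightarrow> real"
  assumes M0: "M \<ge> 0" and lM: "\<forall>i\<in>{1..n}. \<bar>l i\<bar> \<le> M" and r0: "\<bar>r0\<bar> \<le> R"
  defines "rr \<equiv> 1/(2*(1+M))"
    and "N0 \<equiv> 1 + 2*M" and "D0 \<equiv> 2 + M" and "kk \<equiv> \<bar>k / real n\<bar>" and "R1 \<equiv> R + 1"
    and "A \<equiv> \<bar>k / real n\<bar>*(R + 1 +\<bar>cb\<bar>)" and "S0 \<equiv> real n * (2*(1 + 2*M))"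
    and "Lg \<equiv> 4*((1 + 2*M)+(2 + M))*(1+M)"
  shows "\<forall>X\<in>cball ((1,0,0,1,r0)::st) rr. norm (Fx n k cb l X) \<le> 3 + 3*A + R1*S0"
   and "\<forall>X\<in>cball ((1,0,0,1,r0)::st) rr. \<forall>Y\<in>cball ((1,0,0,1,r0)::st) rr.
          norm (Fx n k cb l X - Fx n k cb l Y) \<le> (2 + 3*kk + 2*A + S0 + R1*(real n*Lg)) * norm (X - Y)"
proof -
  have rr0: "rr > 0" using M0 by (simp add: rr_def)
  have rrM: "rr * (1 + M) = 1/2" using M0 by (simp add: rr_def)
  have rrh: "rr \<le> 1/2" using M0 by (simp add: rr_def field_simps)
  have R0: "R \<ge> 0" using r0 by linarith
  have kk0: "kk \<ge> 0" by (simp add: kk_def)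
  have A0: "A \<ge> 0" using R0 by (simp add: A_def)
  have N00: "N0 \<ge> 0" using M0 by (simp add: N0_def)
  have pt: "U + l i * V \<ge> 1/2 \<and> \<bar>P + l i * Q\<bar> \<le> N0 \<and> \<bar>U + l i * V\<bar> \<le> D0 \<and>
      \<bar>(P + l i * Q) / (U + l i * V)\<bar> \<le> 2 * N0"
    if X: "(U,P,V,Q,Rr) \<in> cball ((1,0,0,1,r0)::st) rr" and i: "i \<in> {1..n}" for U P V Q Rr i
  proof -
    note c = cball_comp[OF X]
    note g = gbounds[OF c(1-4) lM[rule_format, OF i] M0 rrM rrh less_imp_le[OF rr0]]
    have "\<bar>(P + l i * Q) / (U + l i * V)\<bar> = \<bar>P + l i * Q\<bar> / (U + l i * V)"
      using g(1) by (simp add: abs_divide)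
    also have "\<dots> \<le> N0 / (1/2)"
      using g N00 by (intro frac_le) (auto simp: N0_def)
    finally show ?thesis using g by (simp add: N0_def D0_def)
  qed
  have Sb: "\<bar>\<Sum>i=1..n. (P + l i * Q) / (U + l i * V)\<bar> \<le> S0"
    if X: "(U,P,V,Q,Rr) \<in> cball ((1,0,0,1,r0)::st) rr" for U P V Q Rr
  proof -
    have "\<bar>\<Sum>i=1..n. (P + l i * Q) / (U + l i * V)\<bar> \<le> (\<Sum>i=1..n. \<bar>(P + l i * Q) / (U + l i * V)\<bar>)"
      by (rule sum_abs)
    also have "\<dots> \<le> (\<Sum>i=1..n. 2 * N0)"
      by (intro sum_mono) (use pt[OF X] in auto)
    finally show ?thesis by (simp add: S0_def N0_def)
  qed
  have comp: "\<bar>U\<bar> \<le> 2 \<and> \<bar>P\<bar> \<le> 1/2 \<and> \<bar>V\<bar> \<le> 1/2 \<and> \<bar>Q\<bar> \<le> 2 \<and> \<bar>Rr\<bar> \<le> R1 \<and>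
       \<bar>k / real n * (Rr - cb)\<bar> \<le> A"
    if X: "(U,P,V,Q,Rr) \<in> cball ((1,0,0,1,r0)::st) rr" for U P V Q Rr
  proof -
    note c = cball_comp[OF X]
    have Rr: "\<bar>Rr\<bar> \<le> R1" using c(5) rrh r0 by (simp add: R1_def)
    have "\<bar>Rr - cb\<bar> \<le> R1 + \<bar>cb\<bar>" using Rr by linarith
    then have "\<bar>k / real n * (Rr - cb)\<bar> \<le> A"
      unfolding abs_mult A_def R1_def by (intro mult_left_mono) auto
    moreover have "\<bar>U\<bar> \<le> 2 \<and> \<bar>P\<bar> \<le> 1/2 \<and> \<bar>V\<bar> \<le> 1/2 \<and> \<bar>Q\<bar> \<le> 2"
      using c rrh by (auto simp: abs_le_iff)
    ultimately show ?thesis using Rr by blast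
  qed
  show "\<forall>X\<in>cball ((1,0,0,1,r0)::st) rr. norm (Fx n k cb l X) \<le> 3 + 3*A + R1*S0"
  proof
    fix X assume X: "X \<in> cball ((1,0,0,1,r0)::st) rr"
    obtain U P V Q Rr where Xe: "X = (U,P,V,Q,Rr)" by (cases X) auto
    note cp = comp[OF X[unfolded Xe]]
    note sb = Sb[OF X[unfolded Xe]]
    let ?a = "k / real n * (Rr - cb)"
    let ?S = "\<Sum>i=1..n. (P + l i * Q) / (U + l i * V)"
    have "norm (Fx n k cb l X) \<le> \<bar>P\<bar> + \<bar>?a * U\<bar> + \<bar>Q\<bar> + \<bar>?a * V\<bar> + \<bar>- Rr * ?S\<bar>"
      unfolding Xe Fx_def by (simp only: prod.case) (rule norm5(6))
    also have "\<bar>?a * U\<bar> \<le> A * 2"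
    proof -
      have "\<bar>?a\<bar> * \<bar>U\<bar> \<le> A * 2" using cp A0 by (intro mult_mono) auto
      then show ?thesis by (simp only: abs_mult[of ?a U])
    qed
    also have "\<bar>?a * V\<bar> \<le> A * (1/2)"
    proof -
      have "\<bar>?a\<bar> * \<bar>V\<bar> \<le> A * (1/2)" using cp A0 by (intro mult_mono) auto
      then show ?thesis by (simp only: abs_mult[of ?a V])
    qed
    also have "\<bar>- Rr * ?S\<bar> \<le> R1 * S0" unfolding abs_mult abs_minus using cp sb by (intro mult_mono) auto
    finally show "norm (Fx n k cb l X) \<le> 3 + 3*A + R1*S0" using cp A0 by simp
  qed
  show "\<forall>X\<in>cball ((1,0,0,1,r0)::st) rr. \<forall>Y\<in>cball ((1,0,0,1,r0)::st) rr.
          norm (Fx n k cb l X - Fx n k cb l Y) \<le> (2 + 3*kk + 2*A + S0 + R1*(real n*Lg)) * norm (X - Y)"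
  proof (intro ballI)
    fix X Y assume X: "X \<in> cball ((1,0,0,1,r0)::st) rr" and Y: "Y \<in> cball ((1,0,0,1,r0)::st) rr"
    obtain U1 P1 V1 Q1 R1' where Xe: "X = (U1,P1,V1,Q1,R1')" by (cases X) auto
    obtain U2 P2 V2 Q2 R2 where Ye: "Y = (U2,P2,V2,Q2,R2)" by (cases Y) auto
    define d where "d = norm (X - Y)"
    have d0: "d \<ge> 0" by (simp add: d_def)
    have dc: "\<bar>U1 - U2\<bar> \<le> d" "\<bar>P1 - P2\<bar> \<le> d" "\<bar>V1 - V2\<bar> \<le> d" "\<bar>Q1 - Q2\<bar> \<le> d" "\<bar>R1' - R2\<bar> \<le> d"
      using norm5[where a="U1 - U2" and b="P1 - P2" and c="V1 - V2" and d="Q1 - Q2" and e="R1' - R2"]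
      unfolding d_def Xe Ye by auto
    note cp1 = comp[OF X[unfolded Xe]] and cp2 = comp[OF Y[unfolded Ye]]
    note sb1 = Sb[OF X[unfolded Xe]] and sb2 = Sb[OF Y[unfolded Ye]]
    let ?a1 = "k / real n * (R1' - cb)" and ?a2 = "k / real n * (R2 - cb)"
    let ?S1 = "\<Sum>i=1..n. (P1 + l i * Q1) / (U1 + l i * V1)"
    let ?S2 = "\<Sum>i=1..n. (P2 + l i * Q2) / (U2 + l i * V2)"
    have da: "\<bar>?a1 - ?a2\<bar> \<le> kk * d"
    proof -
      have "?a1 - ?a2 = k / real n * (R1' - R2)" by (simp add: right_diff_distrib)
      then have "\<bar>?a1 - ?a2\<bar> = kk * \<bar>R1' - R2\<bar>" by (simp add: abs_mult kk_def)
      also have "\<dots> \<le> kk * d" using dc(5) kk0 by (intro mult_left_mono) auto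
      finally show ?thesis .
    qed
    have t2: "\<bar>?a1 * U1 - ?a2 * U2\<bar> \<le> (A * 1 + 2 * kk) * d"
      by (rule prod_lip) (use cp1 cp2 da dc in auto)
    have t4: "\<bar>?a1 * V1 - ?a2 * V2\<bar> \<le> (A * 1 + (1/2) * kk) * d"
      by (rule prod_lip) (use cp1 cp2 da dc in auto)
    have gl: "\<bar>(P1 + l i * Q1) / (U1 + l i * V1) - (P2 + l i * Q2) / (U2 + l i * V2)\<bar> \<le> Lg * d"
      if i: "i \<in> {1..n}" for i
    proof -
      have li: "\<bar>l i\<bar> \<le> M" using lM i by auto
      have dN: "\<bar>(P1 + l i * Q1) - (P2 + l i * Q2)\<bar> \<le> (1 + M) * d"
      proof -
        have "(P1 + l i * Q1) - (P2 + l i * Q2) = (P1 - P2) + l i * (Q1 - Q2)" by (simp add: algebra_simps)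
        moreover have "\<bar>l i * (Q1 - Q2)\<bar> \<le> M * d" unfolding abs_mult using li dc M0 by (intro mult_mono) auto
        ultimately show ?thesis using dc abs_triangle_ineq[of "P1 - P2" "l i * (Q1 - Q2)"] by (simp add: algebra_simps)
      qed
      have dD: "\<bar>(U1 + l i * V1) - (U2 + l i * V2)\<bar> \<le> (1 + M) * d"
      proof -
        have "(U1 + l i * V1) - (U2 + l i * V2) = (U1 - U2) + l i * (V1 - V2)" by (simp add: algebra_simps)
        moreover have "\<bar>l i * (V1 - V2)\<bar> \<le> M * d" unfolding abs_mult using li dc M0 by (intro mult_mono) auto
        ultimately show ?thesis using dc abs_triangle_ineq[of "U1 - U2" "l i * (V1 - V2)"] by (simp add: algebra_simps)
      qed
      have "\<bar>(P1 + l i * Q1) / (U1 + l i * V1) - (P2 + l i * Q2) / (U2 + l i * V2)\<bar> \<le> 4 * (N0 + D0) * ((1 + M) * d)"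
        by (rule quot_lip) (use pt[OF X[unfolded Xe] i] pt[OF Y[unfolded Ye] i] dN dD in auto)
      then show ?thesis by (simp add: Lg_def N0_def D0_def algebra_simps)
    qed
    have dS: "\<bar>?S1 - ?S2\<bar> \<le> (real n * Lg) * d"
    proof -
      have "\<bar>?S1 - ?S2\<bar> = \<bar>\<Sum>i=1..n. ((P1 + l i * Q1) / (U1 + l i * V1) - (P2 + l i * Q2) / (U2 + l i * V2))\<bar>"
        by (simp add: sum_subtractf)
      also have "\<dots> \<le> (\<Sum>i=1..n. \<bar>(P1 + l i * Q1) / (U1 + l i * V1) - (P2 + l i * Q2) / (U2 + l i * V2)\<bar>)"
        by (rule sum_abs)
      also have "\<dots> \<le> (\<Sum>i=1..n. Lg * d)" by (intro sum_mono gl)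
      finally show ?thesis by simp
    qed
    have t5: "\<bar>R1' * ?S1 - R2 * ?S2\<bar> \<le> (R1 * (real n * Lg) + S0 * 1) * d"
      by (rule prod_lip) (use cp1 sb2 dS dc in auto)
    have t5': "\<bar>- R1' * ?S1 - - R2 * ?S2\<bar> \<le> (R1 * (real n * Lg) + S0 * 1) * d"
      using t5 by (simp add: abs_minus_commute algebra_simps)
    have "norm (Fx n k cb l X - Fx n k cb l Y) \<le> \<bar>P1 - P2\<bar> + \<bar>?a1 * U1 - ?a2 * U2\<bar> + \<bar>Q1 - Q2\<bar>
        + \<bar>?a1 * V1 - ?a2 * V2\<bar> + \<bar>- R1' * ?S1 - - R2 * ?S2\<bar>"
      unfolding Xe Ye Fx_def by (simp only: prod.case) (simp only: diff_Pair norm5(6))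
    also have "\<dots> \<le> d + (A * 1 + 2 * kk) * d + d + (A * 1 + (1/2) * kk) * d + (R1 * (real n * Lg) + S0 * 1) * d"
      using dc t2 t4 t5' by linarith
    also have "\<dots> \<le> (2 + 3*kk + 2*A + S0 + R1*(real n*Lg)) * d"
      using d0 kk0 by (simp add: algebra_simps)
    finally show "norm (Fx n k cb l X - Fx n k cb l Y) \<le> (2 + 3*kk + 2*A + S0 + R1*(real n*Lg)) * norm (X - Y)"
      by (simp add: d_def)
  qed
qed

lemma glue:
  fixes f :: "real \<Rightarrow> real"
  assumes "a \<le> t0" "t0 < T" "t \<in> {a..<T}"
    and L: "t \<le> t0 \<Longrightarrow> (f has_real_derivative D) (at t within {a..t0})"
    and Rt: "t0 \<le> t \<Longrightarrow> (f has_real_derivative D) (at t within {t0..<T})"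
  shows "(f has_real_derivative D) (at t within {a..<T})"
proof (cases "t < t0")
  case True
  have "at t within {a..<T} = at t within {a..t0}"
    by (rule at_within_nhd[of _ "{..<t0}"]) (use True assms in auto)
  then show ?thesis using L True by simp
next
  case False
  show ?thesis
  proof (cases "t > t0")
    case True
    have "at t within {a..<T} = at t within {t0..<T}"
      by (rule at_within_nhd[of _ "{t0<..}"]) (use True assms in auto)
    then show ?thesis using Rt True by simp
  next
    case False
    then have tt: "t = t0" using \<open>\<not> t < t0\<close> by simp
    have e: "{a..<T} = {a..t0} \<union> {t0..<T}" using assms by auto
    show ?thesis unfolding e has_field_derivative_iff Lim_within_Un
      using L Rt tt by (simp add: has_field_derivative_iff)
  qed
qed

lemma vd5:
  fixes X :: "real \<Rightarrow> st"
  assumes "(X has_vector_derivative D) F"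
  shows "((\<lambda>t. fst (X t)) has_real_derivative fst D) F"
    "((\<lambda>t. fst (snd (X t))) has_real_derivative fst (snd D)) F"
    "((\<lambda>t. fst (snd (snd (X t)))) has_real_derivative fst (snd (snd D))) F"
    "((\<lambda>t. fst (snd (snd (snd (X t))))) has_real_derivative fst (snd (snd (snd D)))) F"
    "((\<lambda>t. snd (snd (snd (snd (X t))))) has_real_derivative snd (snd (snd (snd D)))) F"
proof -
  note fs = bounded_linear.has_vector_derivative[OF bounded_linear_fst]
  note sn = bounded_linear.has_vector_derivative[OF bounded_linear_snd]
  have s1: "((\<lambda>t. snd (X t)) has_vector_derivative snd D) F" by (rule sn[OF assms])
  have s2: "((\<lambda>t. snd (snd (X t))) has_vector_derivative snd (snd D)) F" by (rule sn[OF s1])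
  have s3: "((\<lambda>t. snd (snd (snd (X t)))) has_vector_derivative snd (snd (snd D))) F" by (rule sn[OF s2])
  have s4: "((\<lambda>t. snd (snd (snd (snd (X t))))) has_vector_derivative snd (snd (snd (snd D)))) F" by (rule sn[OF s3])
  show "((\<lambda>t. fst (X t)) has_real_derivative fst D) F"
    using fs[OF assms] by (simp add: has_real_derivative_iff_has_vector_derivative)
  show "((\<lambda>t. fst (snd (X t))) has_real_derivative fst (snd D)) F"
    using fs[OF s1] by (simp add: has_real_derivative_iff_has_vector_derivative)
  show "((\<lambda>t. fst (snd (snd (X t)))) has_real_derivative fst (snd (snd D))) F"
    using fs[OF s2] by (simp add: has_real_derivative_iff_has_vector_derivative)
  show "((\<lambda>t. fst (snd (snd (snd (X t))))) has_real_derivative fst (snd (snd (snd D)))) F"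
    using fs[OF s3] by (simp add: has_real_derivative_iff_has_vector_derivative)
  show "((\<lambda>t. snd (snd (snd (snd (X t))))) has_real_derivative snd (snd (snd (snd D)))) F"
    using s4 by (simp add: has_real_derivative_iff_has_vector_derivative)
qed

lemma Fx_eval:
  "Fx n k cb l X = (fst (snd X), k / real n * (snd (snd (snd (snd X))) - cb) * fst X,
     fst (snd (snd (snd X))), k / real n * (snd (snd (snd (snd X))) - cb) * fst (snd (snd X)),
     - snd (snd (snd (snd X))) * (\<Sum>i=1..n. (fst (snd X) + l i * fst (snd (snd (snd X)))) / (fst X + l i * fst (snd (snd X)))))"
  by (cases X) (simp add: Fx_def)

lemma alg_id:
  fixes A U V l N :: real
  assumes D: "U + l * V \<noteq> 0"
  shows "((A * U + l * (A * V)) * (U + l * V) - N * N) / ((U + l * V) * (U + l * V)) = - ((N / (U + l * V))^2) + A"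
proof -
  define E where "E = U + l * V"
  have "(A * U + l * (A * V)) = A * E" by (simp add: algebra_simps E_def)
  moreover have "(A * E * E - N * N) / (E * E) = - ((N / E)^2) + A"
    using D unfolding E_def[symmetric] by (simp add: diff_divide_distrib power2_eq_square)
  ultimately show ?thesis by (simp add: E_def)
qed

lemma extend:
  fixes n :: nat and k cb rho0 tB M R :: real and lam0 :: "nat \<Rightarrow> real"
    and lam :: "nat \<Rightarrow> real \<Rightarrow> real" and rho :: "real \<Rightarrow> real"
  assumes sol: "is_solution n k cb rho0 lam0 tB lam rho" and tB: "0 < tB"
    and Mb: "\<And>i t. i \<in> {1..n} \<Longrightarrow> t \<in> {0..<tB} \<Longrightarrow> \<bar>lam i t\<bar> \<le> M"
    and Rb: "\<And>t. t \<in> {0..<tB} \<Longrightarrow> \<bar>rho t\<bar> \<le> R"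
  shows "\<exists>T>tB. \<exists>lam' rho'. is_solution n k cb rho0 lam0 T lam' rho'"
proof -
  define M' where "M' = max M 0"
  have M'0: "M' \<ge> 0" by (simp add: M'_def)
  define rr where "rr = 1/(2*(1+M'))"
  have rr0: "rr > 0" using M'0 by (simp add: rr_def)
  define Bc where "Bc = 3 + 3*(\<bar>k / real n\<bar>*(R + 1 + \<bar>cb\<bar>)) + (R+1) * (real n * (2*(1+2*M')))"
  define Kc where "Kc = 2 + 3*\<bar>k / real n\<bar> + 2*(\<bar>k / real n\<bar>*(R + 1 + \<bar>cb\<bar>)) + real n * (2*(1 + 2*M'))
     + (R+1)*(real n*(4*((1 + 2*M')+(2 + M'))*(1+M')))"
  define h where "h = min (rr / (\<bar>Bc\<bar>+1)) (1/(2*(\<bar>Kc\<bar>+1)))"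
  have h0: "h > 0" using rr0 by (simp add: h_def)
  have hB: "h * Bc \<le> rr"
  proof -
    have "h * Bc \<le> h * (\<bar>Bc\<bar> + 1)" using h0 by (intro mult_left_mono) auto
    also have "\<dots> \<le> rr / (\<bar>Bc\<bar>+1) * (\<bar>Bc\<bar> + 1)" by (intro mult_right_mono) (auto simp: h_def)
    also have "\<dots> = rr" by simp
    finally show ?thesis .
  qed
  have hK: "h * \<bar>Kc\<bar> \<le> 1/2"
  proof -
    have "h * \<bar>Kc\<bar> \<le> h * (\<bar>Kc\<bar> + 1)" using h0 by (intro mult_left_mono) auto
    also have "\<dots> \<le> 1/(2*(\<bar>Kc\<bar>+1)) * (\<bar>Kc\<bar> + 1)" by (intro mult_right_mono) (auto simp: h_def)
    also have "\<dots> = 1/2" by simp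
    finally show ?thesis .
  qed
  define t0 where "t0 = max (tB/2) (tB - h/2)"
  have t0: "0 < t0" "t0 < tB" "tB < t0 + h" using tB h0 by (auto simp: t0_def)
  define T where "T = t0 + h"
  define l where "l i = lam i t0" for i
  define r0 where "r0 = rho t0"
  have t0in: "t0 \<in> {0..<tB}" using t0 by simp
  have lM: "\<forall>i\<in>{1..n}. \<bar>l i\<bar> \<le> M'"
  proof
    fix i assume "i \<in> {1..n}"
    then have "\<bar>lam i t0\<bar> \<le> M" using Mb t0in by blast
    then show "\<bar>l i\<bar> \<le> M'" by (simp add: l_def M'_def)
  qed
  have r0R: "\<bar>r0\<bar> \<le> R" using Rb t0 by (simp add: r0_def)
  note FB = Fx_bounds[OF M'0 lM r0R, of k cb]
  have bnd: "norm (Fx n k cb l x) \<le> Bc" if "x \<in> cball ((1,0,0,1,r0)::st) rr" for x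
  proof -
    have "x \<in> cball ((1,0,0,1,r0)::st) (1/(2*(1+M')))" using that by (simp add: rr_def)
    from FB(1)[rule_format, OF this] show ?thesis by (simp only: Bc_def)
  qed
  have lip: "norm (Fx n k cb l x - Fx n k cb l y) \<le> \<bar>Kc\<bar> * norm (x - y)"
    if "x \<in> cball ((1,0,0,1,r0)::st) rr" "y \<in> cball ((1,0,0,1,r0)::st) rr" for x y
  proof -
    have "norm (Fx n k cb l x - Fx n k cb l y) \<le> Kc * norm (x - y)"
    proof -
      have "x \<in> cball ((1,0,0,1,r0)::st) (1/(2*(1+M')))" "y \<in> cball ((1,0,0,1,r0)::st) (1/(2*(1+M')))"
        using that by (simp_all add: rr_def)
      from FB(2)[rule_format, OF this] show ?thesis by (simp only: Kc_def)
    qed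
    also have "\<dots> \<le> \<bar>Kc\<bar> * norm (x - y)" by (intro mult_right_mono) auto
    finally show ?thesis .
  qed
  obtain X where X0: "X t0 = ((1,0,0,1,r0)::st)"
    and Xp: "\<forall>t\<in>{t0..t0+h}. X t \<in> cball ((1,0,0,1,r0)::st) rr \<and>
         (X has_vector_derivative Fx n k cb l (X t)) (at t within {t0..t0+h})"
    using picard[OF rr0 h0 abs_ge_zero bnd lip hB hK] by blast

  have Tgt: "T > tB" using t0 by (simp add: T_def)
  define Uf where "Uf t = fst (X t)" for t
  define Pf where "Pf t = fst (snd (X t))" for t
  define Vf where "Vf t = fst (snd (snd (X t)))" for t
  define Qf where "Qf t = fst (snd (snd (snd (X t))))" for t
  define Rf where "Rf t = snd (snd (snd (snd (X t))))" for t
  define a where "a t = k / real n * (Rf t - cb)" for t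
  define g where "g i t = (Pf t + l i * Qf t) / (Uf t + l i * Vf t)" for i t
  have Xe: "X t = (Uf t, Pf t, Vf t, Qf t, Rf t)" for t
    by (simp add: Uf_def Pf_def Vf_def Qf_def Rf_def)
  have Ts: "{t0..T} = {t0..t0+h}" by (simp add: T_def)
  have ders: "(Uf has_real_derivative Pf t) (at t within {t0..T}) \<and>
      (Pf has_real_derivative a t * Uf t) (at t within {t0..T}) \<and>
      (Vf has_real_derivative Qf t) (at t within {t0..T}) \<and>
      (Qf has_real_derivative a t * Vf t) (at t within {t0..T}) \<and>
      (Rf has_real_derivative - Rf t * (\<Sum>i=1..n. g i t)) (at t within {t0..T})"
    if t: "t \<in> {t0..T}" for t
  proof -
    have vd: "(X has_vector_derivative Fx n k cb l (X t)) (at t within {t0..T})"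
      using Xp t unfolding Ts by blast
    note v = vd5[OF vd]
    show ?thesis
      using v unfolding Fx_eval
      by (simp add: Uf_def [abs_def] Pf_def [abs_def] Vf_def [abs_def] Qf_def [abs_def] Rf_def [abs_def]
          a_def g_def)
  qed
  have inball: "U + l i * V \<ge> 1/2"
    if t: "t \<in> {t0..T}" and i: "i \<in> {1..n}" and e: "U = Uf t" "V = Vf t" for t i U V
  proof -
    have X: "(Uf t, Pf t, Vf t, Qf t, Rf t) \<in> cball ((1,0,0,1,r0)::st) rr"
      using Xp t unfolding Ts by (metis Xe)
    have rrM: "rr * (1 + M') = 1/2" using M'0 by (simp add: rr_def)
    have rrh: "rr \<le> 1/2" using M'0 by (simp add: rr_def field_simps)
    note c = cball_comp[OF X]
    show ?thesis using gbounds(1)[OF c(1-4) lM[rule_format, OF i] M'0 rrM rrh less_imp_le[OF rr0]] e by simp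
  qed
  have dg: "(g i has_real_derivative (- ((g i t) ^ 2) + k / real n * (Rf t - cb))) (at t within {t0..T})"
    if t: "t \<in> {t0..T}" and i: "i \<in> {1..n}" for t i
  proof -
    note d = ders[OF t]
    have D: "Uf t + l i * Vf t \<noteq> 0" using inball[OF t i refl refl] by linarith
    have dN: "((\<lambda>s. Pf s + l i * Qf s) has_real_derivative a t * Uf t + l i * (a t * Vf t)) (at t within {t0..T})"
      using d by (intro DERIV_add DERIV_cmult) auto
    have dD: "((\<lambda>s. Uf s + l i * Vf s) has_real_derivative Pf t + l i * Qf t) (at t within {t0..T})"
      using d by (intro DERIV_add DERIV_cmult) auto
    have q: "((\<lambda>s. (Pf s + l i * Qf s) / (Uf s + l i * Vf s)) has_real_derivative
        ((a t * Uf t + l i * (a t * Vf t)) * (Uf t + l i * Vf t) - (Pf t + l i * Qf t) * (Pf t + l i * Qf t))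
         / ((Uf t + l i * Vf t) * (Uf t + l i * Vf t))) (at t within {t0..T})"
      by (rule DERIV_divide[OF dN dD D])
    have "((a t * Uf t + l i * (a t * Vf t)) * (Uf t + l i * Vf t) - (Pf t + l i * Qf t) * (Pf t + l i * Qf t))
         / ((Uf t + l i * Vf t) * (Uf t + l i * Vf t)) = - ((g i t) ^ 2) + k / real n * (Rf t - cb)"
      using alg_id[OF D, of "a t" "Pf t + l i * Qf t"] by (simp add: g_def a_def)
    then show ?thesis using q by (simp add: g_def [abs_def])
  qed
  have g0: "g i t0 = lam i t0" for i using X0 by (simp add: g_def Uf_def Pf_def Vf_def Qf_def l_def)
  have R0: "Rf t0 = rho t0" using X0 by (simp add: Rf_def r0_def)
  define lam' where "lam' i t = (if t \<le> t0 then lam i t else g i t)" for i t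
  define rho' where "rho' t = (if t \<le> t0 then rho t else Rf t)" for t
  have lamR: "lam' i t = g i t" if "t \<in> {t0..T}" for i t using that g0 by (auto simp: lam'_def)
  have rhoR: "rho' t = Rf t" if "t \<in> {t0..T}" for t using that R0 by (auto simp: rho'_def)
  have lamL: "lam' i t = lam i t" if "t \<le> t0" for i t using that by (auto simp: lam'_def)
  have rhoL: "rho' t = rho t" if "t \<le> t0" for t using that by (auto simp: rho'_def)
  have tT: "t0 < T" using h0 by (simp add: T_def)
  have solL: "rho 0 = rho0 \<and> (\<forall>i\<in>{1..n}. lam i 0 = lam0 i) \<and>
     (\<forall>t\<in>{0..<tB}.
        (\<forall>i\<in>{1..n}. (lam i has_real_derivative
            (- ((lam i t) ^ 2) + k / real n * (rho t - cb))) (at t within {0..<tB})) \<and>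
        (rho has_real_derivative (- rho t * (\<Sum>i=1..n. lam i t))) (at t within {0..<tB}))"
    using sol unfolding is_solution_def .
  have dlam: "(lam i has_real_derivative (- ((lam i t) ^ 2) + k / real n * (rho t - cb))) (at t within {0..<tB})"
    if "t \<in> {0..<tB}" "i \<in> {1..n}" for t i using solL that by blast
  have drho: "(rho has_real_derivative (- rho t * (\<Sum>i=1..n. lam i t))) (at t within {0..<tB})"
    if "t \<in> {0..<tB}" for t using solL that by blast
  have sub0: "{0..t0} \<subseteq> {0..<tB}" using t0 by auto
  have "is_solution n k cb rho0 lam0 T lam' rho'"
    unfolding is_solution_def
  proof (intro conjI ballI)
    show "rho' 0 = rho0" using conjunct1[OF solL] t0 rhoL[of 0] by simp
    show "lam' i 0 = lam0 i" if "i \<in> {1..n}" for i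
      using conjunct1[OF conjunct2[OF solL]] t0 lamL[of 0 i] that by simp
    fix t assume t: "t \<in> {0..<T}"
    show "(rho' has_real_derivative (- rho' t * (\<Sum>i=1..n. lam' i t))) (at t within {0..<T})"
    proof (rule glue[OF less_imp_le[OF t0(1)] tT t])
      assume tl: "t \<le> t0"
      have tin: "t \<in> {0..<tB}" using tl t t0 by simp
      have "(rho has_real_derivative (- rho t * (\<Sum>i=1..n. lam i t))) (at t within {0..t0})"
        by (rule has_field_derivative_subset[OF drho[OF tin] sub0])
      then have "(rho' has_real_derivative (- rho t * (\<Sum>i=1..n. lam i t))) (at t within {0..t0})"
        by (rule has_field_derivative_transform_within[OF _ zero_less_one]) (use t tl in \<open>simp_all add: rhoL\<close>)
      then show "(rho' has_real_derivative (- rho' t * (\<Sum>i=1..n. lam' i t))) (at t within {0..t0})"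
        using tl by (simp add: rhoL lamL)
    next
      assume tr: "t0 \<le> t"
      have tin: "t \<in> {t0..T}" using tr t by simp
      have "(Rf has_real_derivative - Rf t * (\<Sum>i=1..n. g i t)) (at t within {t0..<T})"
        by (rule has_field_derivative_subset[OF ders[OF tin, THEN conjunct2, THEN conjunct2, THEN conjunct2, THEN conjunct2]]) auto
      then have "(rho' has_real_derivative - Rf t * (\<Sum>i=1..n. g i t)) (at t within {t0..<T})"
        by (rule has_field_derivative_transform_within[OF _ zero_less_one]) (use tin t in \<open>simp_all add: rhoR\<close>)
      then show "(rho' has_real_derivative (- rho' t * (\<Sum>i=1..n. lam' i t))) (at t within {t0..<T})"
        using tin by (simp add: rhoR lamR)
    qed
    fix i assume i: "i \<in> {1..n}"
    show "(lam' i has_real_derivative (- ((lam' i t) ^ 2) + k / real n * (rho' t - cb))) (at t within {0..<T})"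
    proof (rule glue[OF less_imp_le[OF t0(1)] tT t])
      assume tl: "t \<le> t0"
      have tin: "t \<in> {0..<tB}" using tl t t0 by simp
      have "(lam i has_real_derivative (- ((lam i t) ^ 2) + k / real n * (rho t - cb))) (at t within {0..t0})"
        by (rule has_field_derivative_subset[OF dlam[OF tin i] sub0])
      then have "(lam' i has_real_derivative (- ((lam i t) ^ 2) + k / real n * (rho t - cb))) (at t within {0..t0})"
        by (rule has_field_derivative_transform_within[OF _ zero_less_one]) (use t tl in \<open>simp_all add: lamL\<close>)
      then show "(lam' i has_real_derivative (- ((lam' i t) ^ 2) + k / real n * (rho' t - cb))) (at t within {0..t0})"
        using tl by (simp add: rhoL lamL)
    next
      assume tr: "t0 \<le> t"
      have tin: "t \<in> {t0..T}" using tr t by simp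
      have "(g i has_real_derivative (- ((g i t) ^ 2) + k / real n * (Rf t - cb))) (at t within {t0..<T})"
        by (rule has_field_derivative_subset[OF dg[OF tin i]]) auto
      then have "(lam' i has_real_derivative (- ((g i t) ^ 2) + k / real n * (Rf t - cb))) (at t within {t0..<T})"
        by (rule has_field_derivative_transform_within[OF _ zero_less_one]) (use tin t in \<open>simp_all add: lamR\<close>)
      then show "(lam' i has_real_derivative (- ((lam' i t) ^ 2) + k / real n * (rho' t - cb))) (at t within {t0..<T})"
        using tin by (simp add: rhoR lamR)
    qed
  qed
  then show ?thesis using Tgt by blast
qed

locale sys =
  fixes n :: nat and k cb rho0 tB :: real and lam0 :: "nat \<Rightarrow> real"
    and lam :: "nat \<Rightarrow> real \<Rightarrow> real" and rho :: "real \<Rightarrow> real"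
  assumes sol: "is_solution n k cb rho0 lam0 tB lam rho" and tB: "0 < tB"
begin

definition E where "E i t = integral {0..t} (lam i)"

lemma solL: "rho 0 = rho0 \<and> (\<forall>i\<in>{1..n}. lam i 0 = lam0 i) \<and>
     (\<forall>t\<in>{0..<tB}.
        (\<forall>i\<in>{1..n}. (lam i has_real_derivative
            (- ((lam i t) ^ 2) + k / real n * (rho t - cb))) (at t within {0..<tB})) \<and>
        (rho has_real_derivative (- rho t * (\<Sum>i=1..n. lam i t))) (at t within {0..<tB}))"
  using sol unfolding is_solution_def .

lemma rho_0: "rho 0 = rho0" using solL by blast
lemma lam_0: "i \<in> {1..n} \<Longrightarrow> lam i 0 = lam0 i" using solL by blast

lemma dlam: "t \<in> {0..<tB} \<Longrightarrow> i \<in> {1..n} \<Longrightarrow>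
  (lam i has_real_derivative (- ((lam i t) ^ 2) + k / real n * (rho t - cb))) (at t within {0..<tB})"
  using solL by blast

lemma drho: "t \<in> {0..<tB} \<Longrightarrow>
  (rho has_real_derivative (- rho t * (\<Sum>i=1..n. lam i t))) (at t within {0..<tB})"
  using solL by blast

lemma cont_lam: "i \<in> {1..n} \<Longrightarrow> continuous_on {0..<tB} (lam i)"
  unfolding continuous_on_eq_continuous_within using dlam DERIV_continuous by blast

lemma cont_rho: "continuous_on {0..<tB} rho"
  unfolding continuous_on_eq_continuous_within using drho DERIV_continuous by blast

lemma at_eq_open: "t \<in> {0<..<tB} \<Longrightarrow> at t within {0..<tB} = at t"
proof -
  assume t: "t \<in> {0<..<tB}"
  have "at t within {0..<tB} = at t within UNIV"
    by (rule at_within_nhd[of _ "{0<..<tB}"]) (use t in auto)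
  then show ?thesis by simp
qed

lemma dE: assumes t: "t \<in> {0..<tB}" and i: "i \<in> {1..n}"
  shows "(E i has_real_derivative lam i t) (at t within {0..<tB})"
proof -
  define b where "b = (t + tB) / 2"
  have tb: "t < b" "b < tB" using t by (auto simp: b_def)
  have c: "continuous_on {0..b} (lam i)"
    by (rule continuous_on_subset[OF cont_lam[OF i]]) (use tb in auto)
  have "((\<lambda>s. integral {0..s} (lam i)) has_vector_derivative lam i t) (at t within {0..b})"
    by (rule integral_has_vector_derivative[OF c]) (use t tb in auto)
  moreover have "at t within {0..<tB} = at t within {0..b}"
    by (rule at_within_nhd[of _ "{..<b}"]) (use t tb in auto)
  ultimately show ?thesis
    by (simp add: E_def[abs_def] has_real_derivative_iff_has_vector_derivative)
qed

lemma E0: "E i 0 = 0" by (simp add: E_def)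

lemma const0:
  fixes f :: "real \<Rightarrow> real"
  assumes "\<And>t. t \<in> {0..<tB} \<Longrightarrow> (f has_real_derivative 0) (at t within {0..<tB})"
    and "t \<in> {0..<tB}"
  shows "f t = f 0"
proof -
  obtain c where "\<forall>x\<in>{0..<tB}. f x = c"
    using has_field_derivative_zero_constant[of "{0..<tB}" f] assms(1) by auto
  then show ?thesis using assms(2) tB by auto
qed

lemma ident1:
  assumes i: "i \<in> {1..n}" and j: "j \<in> {1..n}" and t: "t \<in> {0..<tB}"
  shows "(lam i t - lam j t) * exp (E i t + E j t) = lam0 i - lam0 j"
proof -
  let ?f = "\<lambda>t. (lam i t - lam j t) * exp (E i t + E j t)"
  have "(?f has_real_derivative 0) (at s within {0..<tB})" if s: "s \<in> {0..<tB}" for s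
  proof -
    have "(?f has_real_derivative
        (lam i s - lam j s) * (exp (E i s + E j s) * (lam i s + lam j s)) +
        ((- ((lam i s) ^ 2) + k / real n * (rho s - cb)) - (- ((lam j s) ^ 2) + k / real n * (rho s - cb)))
          * exp (E i s + E j s))
        (at s within {0..<tB})"
    proof -
      have a: "((\<lambda>t. lam i t - lam j t) has_real_derivative
         (- ((lam i s) ^ 2) + k / real n * (rho s - cb)) - (- ((lam j s) ^ 2) + k / real n * (rho s - cb)))
         (at s within {0..<tB})" by (rule DERIV_diff[OF dlam[OF s i] dlam[OF s j]])
      have b: "((\<lambda>t. E i t + E j t) has_real_derivative lam i s + lam j s) (at s within {0..<tB})"
        by (rule DERIV_add[OF dE[OF s i] dE[OF s j]])
      have c: "((\<lambda>t. exp (E i t + E j t)) has_real_derivative exp (E i s + E j s) * (lam i s + lam j s)) (at s within {0..<tB})"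
        by (rule DERIV_chain2[OF DERIV_exp b])
      show ?thesis by (rule DERIV_mult'[OF a c])
    qed
    moreover have "(lam i s - lam j s) * (exp (E i s + E j s) * (lam i s + lam j s)) +
        ((- ((lam i s) ^ 2) + k / real n * (rho s - cb)) - (- ((lam j s) ^ 2) + k / real n * (rho s - cb)))
          * exp (E i s + E j s) = 0"
      by (simp add: algebra_simps power2_eq_square)
    ultimately show ?thesis by simp
  qed
  then have "?f t = ?f 0" using const0 t by blast
  then show ?thesis using lam_0[OF i] lam_0[OF j] by (simp add: E0)
qed

lemma ident2:
  assumes t: "t \<in> {0..<tB}"
  shows "rho t * exp (\<Sum>i=1..n. E i t) = rho0"
proof -
  let ?f = "\<lambda>t. rho t * exp (\<Sum>i=1..n. E i t)"
  have "(?f has_real_derivative 0) (at s within {0..<tB})" if s: "s \<in> {0..<tB}" for s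
  proof -
    have "(?f has_real_derivative rho s * (exp (\<Sum>i=1..n. E i s) * (\<Sum>i=1..n. lam i s))
        + (- rho s * (\<Sum>i=1..n. lam i s)) * exp (\<Sum>i=1..n. E i s)) (at s within {0..<tB})"
    proof -
      have b: "((\<lambda>t. \<Sum>i=1..n. E i t) has_real_derivative (\<Sum>i=1..n. lam i s)) (at s within {0..<tB})"
        by (rule DERIV_sum) (rule dE[OF s], simp)
      have c: "((\<lambda>t. exp (\<Sum>i=1..n. E i t)) has_real_derivative exp (\<Sum>i=1..n. E i s) * (\<Sum>i=1..n. lam i s)) (at s within {0..<tB})"
        by (rule DERIV_chain2[OF DERIV_exp b])
      show ?thesis by (rule DERIV_mult'[OF drho[OF s] c])
    qed
    then show ?thesis by (simp add: algebra_simps)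
  qed
  then have "?f t = ?f 0" using const0 t by blast
  then show ?thesis by (simp add: E0 rho_0)
qed

end

context sys begin

lemma dE_at: "t \<in> {0<..<tB} \<Longrightarrow> i \<in> {1..n} \<Longrightarrow> (E i has_real_derivative lam i t) (at t)"
  using dE[of t i] at_eq_open[of t] by simp

lemma dlam_at: "t \<in> {0<..<tB} \<Longrightarrow> i \<in> {1..n} \<Longrightarrow>
  (lam i has_real_derivative (- ((lam i t) ^ 2) + k / real n * (rho t - cb))) (at t)"
  using dlam[of t i] at_eq_open[of t] by simp

lemma bounded_near:
  fixes f :: "real \<Rightarrow> real"
  assumes c: "continuous_on {0..<tB} f" and ev: "eventually (\<lambda>t. \<bar>f t\<bar> \<le> C) (at_left tB)"
  shows "\<exists>M. \<forall>t\<in>{0..<tB}. \<bar>f t\<bar> \<le> M"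
proof -
  obtain b where b: "b < tB" "\<forall>y>b. y < tB \<longrightarrow> \<bar>f y\<bar> \<le> C"
    using ev unfolding eventually_at_left_field by blast
  define t1 where "t1 = max 0 b"
  have t1: "0 \<le> t1" "t1 < tB" using b tB by (auto simp: t1_def)
  have "compact (f ` {0..t1})"
    by (rule compact_continuous_image[OF continuous_on_subset[OF c]]) (use t1 in auto)
  then obtain B where B: "\<forall>x\<in>f ` {0..t1}. norm x \<le> B"
    using compact_imp_bounded bounded_iff by metis
  show ?thesis
  proof (intro exI[of _ "max B C"] ballI)
    fix t assume t: "t \<in> {0..<tB}"
    show "\<bar>f t\<bar> \<le> max B C"
    proof (cases "t \<le> t1")
      case True then show ?thesis using B t by force
    next
      case False
      then have "t > b" by (simp add: t1_def)
      then have "\<bar>f t\<bar> \<le> C" using b t by auto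
      then show ?thesis by simp
    qed
  qed
qed

end

locale sys2 = sys +
  fixes J :: nat and p q :: real and u :: "nat \<Rightarrow> real \<Rightarrow> real"
  assumes n2: "n \<ge> 2" and kpos: "k > 0" and cbpos: "cb > 0" and rho0pos: "rho0 > 0"
    and J: "1 \<le> J" "J \<le> n"
    and eqJ: "\<forall>i\<in>{1..J}. lam0 i = lam0 1"
    and gapJ: "J < n \<longrightarrow> lam0 J < lam0 (J + 1)"
    and ordJ: "\<forall>i j. J + 1 \<le> i \<and> i \<le> j \<and> j \<le> n \<longrightarrow> lam0 i \<le> lam0 j"
    and nomax: "\<not> (\<exists>T > tB. \<exists>lam' rho'. is_solution n k cb rho0 lam0 T lam' rho')"
    and u_def: "\<And>i t. u i t = exp (integral {0..t} (lam i))"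
    and p: "((\<lambda>t. deriv (u 1) t * u n t) \<longlongrightarrow> - p) (at_left tB)"
    and q: "((\<lambda>t. u 1 t * deriv (u n) t) \<longlongrightarrow> q) (at_left tB)"
    and pq: "p = q"
begin

lemma one_in: "1 \<in> {1..n}" and n_in: "n \<in> {1..n}" using n2 by auto

lemma lam0_ord: assumes i: "i \<in> {1..n}" shows "lam0 1 \<le> lam0 i \<and> lam0 i \<le> lam0 n"
proof -
  have oJ: "lam0 a \<le> lam0 b" if "J + 1 \<le> a" "a \<le> b" "b \<le> n" for a b
    using ordJ[rule_format, of a b] that by simp
  have eJ: "lam0 a = lam0 1" if "a \<in> {1..J}" for a using eqJ that by blast
  have J1: "lam0 J = lam0 1" using eJ[of J] J by simp
  have n1: "lam0 1 \<le> lam0 n"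
  proof (cases "J < n")
    case True
    then have "lam0 J < lam0 (J+1)" using gapJ by simp
    moreover have "lam0 (J+1) \<le> lam0 n" using oJ[of "J+1" n] True by simp
    ultimately show ?thesis using J1 by simp
  next
    case False then have "J = n" using J by simp
    then show ?thesis using J1 by simp
  qed
  show ?thesis
  proof (cases "i \<le> J")
    case True
    then have "lam0 i = lam0 1" using eJ[of i] i by simp
    then show ?thesis using n1 by simp
  next
    case False
    then have "J < n" using i by simp
    then have "lam0 J < lam0 (J+1)" using gapJ by simp
    moreover have "lam0 (J+1) \<le> lam0 i" using oJ[of "J+1" i] False i by simp
    moreover have "lam0 i \<le> lam0 n" using oJ[of i n] False i by simp
    ultimately show ?thesis using J1 by simp
  qed
qed

lemma u_eq: "u i t = exp (E i t)" by (simp add: u_def E_def)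

definition P where "P t = exp (E 1 t + E n t)"

lemma P_pos: "P t > 0" by (simp add: P_def)

lemma deriv_u: assumes t: "t \<in> {0<..<tB}" and i: "i \<in> {1..n}"
  shows "deriv (u i) t = lam i t * u i t"
proof -
  have "((\<lambda>t. exp (E i t)) has_real_derivative exp (E i t) * lam i t) (at t)"
    by (rule DERIV_chain2[OF DERIV_exp dE_at[OF t i]])
  moreover have "u i = (\<lambda>t. exp (E i t))" by (rule ext) (simp add: u_eq)
  ultimately show ?thesis by (simp add: DERIV_imp_deriv mult.commute)
qed

lemma ev_in: "eventually (\<lambda>t. t \<in> {0<..<tB}) (at_left tB)"
  using eventually_at_left_real[OF tB] .

lemma A1: "((\<lambda>t. lam 1 t * P t) \<longlongrightarrow> - p) (at_left tB)"
proof (rule Lim_transform_eventually[OF p])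
  show "\<forall>\<^sub>F t in at_left tB. deriv (u 1) t * u n t = lam 1 t * P t"
    using ev_in by eventually_elim (simp only: deriv_u[OF _ one_in] u_eq P_def exp_add mult.assoc)
qed

lemma An: "((\<lambda>t. lam n t * P t) \<longlongrightarrow> p) (at_left tB)"
proof (rule Lim_transform_eventually[OF q[folded pq]])
  show "\<forall>\<^sub>F t in at_left tB. u 1 t * deriv (u n) t = lam n t * P t"
    using ev_in by eventually_elim (simp only: deriv_u[OF _ n_in] u_eq P_def exp_add mult.commute mult.left_commute)
qed

lemma p_val: "2 * p = lam0 n - lam0 1"
proof -
  have "((\<lambda>t. lam 1 t * P t - lam n t * P t) \<longlongrightarrow> - p - p) (at_left tB)"
    by (intro tendsto_diff A1 An)
  moreover have "\<forall>\<^sub>F t in at_left tB. lam 1 t * P t - lam n t * P t = lam0 1 - lam0 n"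
    using ev_in
  proof eventually_elim
    case (elim t)
    then have "(lam 1 t - lam n t) * exp (E 1 t + E n t) = lam0 1 - lam0 n"
      by (intro ident1 one_in n_in) auto
    then show ?case by (simp add: P_def algebra_simps)
  qed
  ultimately have "((\<lambda>t. lam0 1 - lam0 n) \<longlongrightarrow> - p - p) (at_left tB)"
    by (rule Lim_transform_eventually)
  then have "lam0 1 - lam0 n = - p - p"
    by (rule tendsto_unique[OF trivial_limit_at_left_real tendsto_const])
  then show ?thesis by simp
qed

lemma p_nonneg: "p \<ge> 0" using p_val lam0_ord[OF n_in] by simp

lemma dP_at: assumes t: "t \<in> {0<..<tB}"
  shows "(P has_real_derivative (lam 1 t + lam n t) * P t) (at t)"
proof -
  have "((\<lambda>t. exp (E 1 t + E n t)) has_real_derivative exp (E 1 t + E n t) * (lam 1 t + lam n t)) (at t)"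
    by (rule DERIV_chain2[OF DERIV_exp DERIV_add[OF dE_at[OF t one_in] dE_at[OF t n_in]]])
  then show ?thesis by (simp add: P_def[abs_def] mult.commute)
qed

lemma dP_lim: "((\<lambda>t. (lam 1 t + lam n t) * P t) \<longlongrightarrow> 0) (at_left tB)"
proof -
  have "((\<lambda>t. lam 1 t * P t + lam n t * P t) \<longlongrightarrow> - p + p) (at_left tB)"
    by (intro tendsto_add A1 An)
  then show ?thesis by (simp add: algebra_simps)
qed

end

context sys2 begin

lemma P_conv: "\<exists>L. (P \<longlongrightarrow> L) (at_left tB)"
proof -
  have "\<forall>\<^sub>F t in at_left tB. dist ((lam 1 t + lam n t) * P t) 0 < 1"
    using tendstoD[OF dP_lim, of 1] by simp
  then have "\<forall>\<^sub>F t in at_left tB. \<bar>(lam 1 t + lam n t) * P t\<bar> \<le> 1 \<and> t \<in> {0<..<tB}"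
    using ev_in by eventually_elim auto
  then obtain b where b: "b < tB" "\<And>y. b < y \<Longrightarrow> y < tB \<Longrightarrow> \<bar>(lam 1 y + lam n y) * P y\<bar> \<le> 1 \<and> y \<in> {0<..<tB}"
    unfolding eventually_at_left_field by blast
  define t1 where "t1 = max 0 b"
  have t1: "t1 < tB" using b tB by (simp add: t1_def)
  define S where "S = {t1<..<tB}"
  have inS: "y \<in> {0<..<tB} \<and> \<bar>(lam 1 y + lam n y) * P y\<bar> \<le> 1" if "y \<in> S" for y
    using b(2)[of y] that by (auto simp: S_def t1_def)
  have lip: "\<bar>P x - P y\<bar> \<le> 1 * \<bar>x - y\<bar>" if "x \<in> S" "y \<in> S" for x y
  proof -
    have "norm (P x - P y) \<le> 1 * norm (x - y)"
    proof (rule field_differentiable_bound[of S P "\<lambda>z. (lam 1 z + lam n z) * P z"])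
      show "convex S" by (simp add: S_def)
      show "(P has_field_derivative (lam 1 z + lam n z) * P z) (at z within S)" if "z \<in> S" for z
        using dP_at[of z] inS[OF that] by (simp add: has_field_derivative_at_within)
      show "norm ((lam 1 z + lam n z) * P z) \<le> 1" if "z \<in> S" for z using inS[OF that] by simp
    qed (use that in auto)
    then show ?thesis by simp
  qed
  have uc: "uniformly_continuous_on S P"
    unfolding uniformly_continuous_on_def
  proof (intro allI impI)
    fix e :: real assume e: "e > 0"
    show "\<exists>d>0. \<forall>x\<in>S. \<forall>x'\<in>S. dist x' x < d \<longrightarrow> dist (P x') (P x) < e"
    proof (intro exI[of _ e] conjI ballI impI)
      show "e > 0" by (rule e)
      fix x x' assume "x \<in> S" "x' \<in> S" "dist x' x < e"
      then show "dist (P x') (P x) < e" using lip[of x' x] by (simp add: dist_real_def)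
    qed
  qed
  have cl: "tB \<in> closure S" using t1 by (simp add: S_def closure_greaterThanLessThan)
  obtain L where L: "(P \<longlongrightarrow> L) (at tB within S)"
    using uniformly_continuous_on_extension_at_closure[OF uc cl] by blast
  have "at tB within S = at tB within {..<tB}"
    by (rule at_within_nhd[of _ "{t1<..}"]) (use t1 in \<open>auto simp: S_def\<close>)
  then show ?thesis using L by auto
qed

end

context sys2 begin

lemma lam_between: assumes i: "i \<in> {1..n}" and t: "t \<in> {0..<tB}"
  shows "lam 1 t \<le> lam i t \<and> lam i t \<le> lam n t"
proof -
  have a: "(lam i t - lam 1 t) * exp (E i t + E 1 t) = lam0 i - lam0 1" by (rule ident1[OF i one_in t])
  have b: "(lam n t - lam i t) * exp (E n t + E i t) = lam0 n - lam0 i" by (rule ident1[OF n_in i t])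
  have "lam0 i - lam0 1 \<ge> 0" "lam0 n - lam0 i \<ge> 0" using lam0_ord[OF i] by auto
  then have "(lam i t - lam 1 t) * exp (E i t + E 1 t) \<ge> 0" "(lam n t - lam i t) * exp (E n t + E i t) \<ge> 0"
    using a b by auto
  then have "lam i t - lam 1 t \<ge> 0" "lam n t - lam i t \<ge> 0"
    by (simp_all add: zero_le_mult_iff)
  then show ?thesis by simp
qed

lemma lam_bound_from_P:
  assumes L: "(P \<longlongrightarrow> L) (at_left tB)" and L0: "L \<noteq> 0" and j: "j \<in> {1..n}"
    and A: "((\<lambda>t. lam j t * P t) \<longlongrightarrow> c) (at_left tB)"
  shows "\<exists>M. \<forall>t\<in>{0..<tB}. \<bar>lam j t\<bar> \<le> M"
proof -
  have "((\<lambda>t. lam j t * P t / P t) \<longlongrightarrow> c / L) (at_left tB)"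
    by (rule tendsto_divide[OF A L L0])
  then have lim: "(lam j \<longlongrightarrow> c / L) (at_left tB)"
    by (rule Lim_transform_eventually) (simp add: P_pos less_imp_neq[symmetric])
  have "\<forall>\<^sub>F t in at_left tB. dist (lam j t) (c / L) < 1" using tendstoD[OF lim, of 1] by simp
  then have "\<forall>\<^sub>F t in at_left tB. \<bar>lam j t\<bar> \<le> \<bar>c / L\<bar> + 1"
  proof eventually_elim
    case (elim t)
    then have "\<bar>lam j t - c / L\<bar> < 1" by (simp add: dist_real_def)
    then show ?case using abs_triangle_ineq2[of "lam j t" "c / L"] by linarith
  qed
  then show ?thesis by (rule bounded_near[OF cont_lam[OF j]])
qed

lemma E_bound: assumes i: "i \<in> {1..n}" and t: "t \<in> {0..<tB}"
    and M: "\<And>s. s \<in> {0..<tB} \<Longrightarrow> \<bar>lam i s\<bar> \<le> M"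
  shows "\<bar>E i t\<bar> \<le> M * tB"
proof -
  have c: "continuous_on {0..t} (lam i)"
    by (rule continuous_on_subset[OF cont_lam[OF i]]) (use t in auto)
  have "norm (integral {0..t} (lam i)) \<le> M * (t - 0)"
    by (rule integral_bound) (use t c M in auto)
  moreover have "M \<ge> 0" using M[of 0] tB by force
  ultimately have "\<bar>E i t\<bar> \<le> M * t" by (simp add: E_def)
  also have "\<dots> \<le> M * tB" using \<open>M \<ge> 0\<close> t by (intro mult_left_mono) auto
  finally show ?thesis .
qed

lemma P_to_0: "(P \<longlongrightarrow> 0) (at_left tB)"
proof -
  obtain L where L: "(P \<longlongrightarrow> L) (at_left tB)" using P_conv by blast
  have "L = 0"
  proof (rule ccontr)
    assume L0: "L \<noteq> 0"
    obtain M1 where M1: "\<forall>t\<in>{0..<tB}. \<bar>lam 1 t\<bar> \<le> M1"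
      using lam_bound_from_P[OF L L0 one_in A1] by blast
    obtain Mn where Mn: "\<forall>t\<in>{0..<tB}. \<bar>lam n t\<bar> \<le> Mn"
      using lam_bound_from_P[OF L L0 n_in An] by blast
    define M where "M = max M1 Mn"
    have Mb: "\<bar>lam i t\<bar> \<le> M" if "i \<in> {1..n}" "t \<in> {0..<tB}" for i t
    proof -
      have "lam 1 t \<le> lam i t" "lam i t \<le> lam n t" using lam_between[OF that] by auto
      moreover have "\<bar>lam 1 t\<bar> \<le> M1" "\<bar>lam n t\<bar> \<le> Mn" using M1 Mn that(2) by auto
      ultimately show ?thesis by (auto simp: M_def)
    qed
    define R where "R = rho0 * exp (real n * (M * tB))"
    have Rb: "\<bar>rho t\<bar> \<le> R" if t: "t \<in> {0..<tB}" for t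
    proof -
      have id: "rho t * exp (\<Sum>i=1..n. E i t) = rho0" by (rule ident2[OF t])
      then have rt: "rho t = rho0 * exp (- (\<Sum>i=1..n. E i t))"
        by (simp add: exp_minus field_simps)
      have "- (\<Sum>i=1..n. E i t) \<le> (\<Sum>i=1..n. \<bar>E i t\<bar>)"
        using sum_abs[of "\<lambda>i. E i t" "{1..n}"] by linarith
      also have "\<dots> \<le> (\<Sum>i=1..n. M * tB)"
        by (intro sum_mono E_bound Mb t) auto
      finally have "- (\<Sum>i=1..n. E i t) \<le> real n * (M * tB)" by simp
      then have "exp (- (\<Sum>i=1..n. E i t)) \<le> exp (real n * (M * tB))" by simp
      then have "rho t \<le> R" using rt rho0pos by (simp add: R_def)
      moreover have "rho t > 0" using rt rho0pos by simp
      ultimately show ?thesis by simp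
    qed
    have "\<exists>T>tB. \<exists>lam' rho'. is_solution n k cb rho0 lam0 T lam' rho'"
      by (rule extend[OF sol tB Mb Rb])
    then show False using nomax by blast
  qed
  then show ?thesis using L by simp
qed

end

context sys2 begin

lemma p_pos: "p > 0"
proof (rule ccontr)
  assume "\<not> p > 0"
  then have p0: "p = 0" using p_nonneg by simp
  then have l1n: "lam0 n = lam0 1" using p_val by simp
  have eJ: "lam0 a = lam0 1" if "a \<in> {1..J}" for a using eqJ that by blast
  have Jn: "J = n"
  proof (rule ccontr)
    assume "J \<noteq> n" then have Jl: "J < n" using J by simp
    then have "lam0 J < lam0 (J+1)" using gapJ by simp
    moreover have "lam0 (J+1) \<le> lam0 n" using ordJ[rule_format, of "J+1" n] Jl by simp
    moreover have "lam0 J = lam0 1" using eJ[of J] J by simp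
    ultimately show False using l1n by simp
  qed
  have all0: "lam0 i = lam0 1" if "i \<in> {1..n}" for i using eJ[of i] that Jn by simp
  have lam_eq: "lam i t = lam 1 t" if i: "i \<in> {1..n}" and t: "t \<in> {0..<tB}" for i t
  proof -
    have "(lam i t - lam 1 t) * exp (E i t + E 1 t) = lam0 i - lam0 1" by (rule ident1[OF i one_in t])
    then have "(lam i t - lam 1 t) * exp (E i t + E 1 t) = 0" using all0[OF i] by simp
    then show ?thesis by simp
  qed
  have E_eq: "E i t = E 1 t" if i: "i \<in> {1..n}" and t: "t \<in> {0..<tB}" for i t
    unfolding E_def by (rule integral_cong) (use lam_eq[OF i] t in auto)
  define e where "e = E 1"
  define l where "l = lam 1"
  have rho_id: "rho t * (exp (e t))^2 = rho0 * exp ((2 - real n) * e t)" if t: "t \<in> {0..<tB}" for t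
  proof -
    have "rho t * exp (\<Sum>i=1..n. E i t) = rho0" by (rule ident2[OF t])
    moreover have "(\<Sum>i=1..n. E i t) = (\<Sum>i=1..n. e t)"
    proof (rule sum.cong[OF refl])
      fix i assume "i \<in> {1..n}" then show "E i t = e t" unfolding e_def by (rule E_eq[OF _ t])
    qed
    ultimately have "rho t * exp (real n * e t) = rho0" by simp
    then have "rho t * exp (real n * e t) * exp ((2 - real n) * e t) = rho0 * exp ((2 - real n) * e t)" by simp
    moreover have "exp (real n * e t) * exp ((2 - real n) * e t) = (exp (e t))^2"
      by (simp add: exp_add[symmetric] power2_eq_square algebra_simps)
    ultimately show ?thesis by (simp add: mult.assoc)
  qed
  define G where "G t = (if n = 2 then e t else - exp (- (real n - 2) * e t) / (real n - 2))" for t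
  have dG: "(G has_real_derivative l s * exp ((2 - real n) * e s)) (at s within {0..<tB})"
    if s: "s \<in> {0..<tB}" for s
  proof (cases "n = 2")
    case True
    then show ?thesis using dE[OF s one_in] by (simp add: G_def[abs_def] e_def l_def)
  next
    case False
    then have n3: "real n - 2 > 0" using n2 by simp
    have a: "((\<lambda>t. - (real n - 2) * e t) has_real_derivative - (real n - 2) * l s) (at s within {0..<tB})"
      using DERIV_cmult[OF dE[OF s one_in], of "- (real n - 2)"] by (simp add: e_def l_def)
    have b: "((\<lambda>t. exp (- (real n - 2) * e t)) has_real_derivative exp (- (real n - 2) * e s) * (- (real n - 2) * l s)) (at s within {0..<tB})"
      by (rule DERIV_chain2[OF DERIV_exp a])
    have c: "((\<lambda>t. - exp (- (real n - 2) * e t) / (real n - 2)) has_real_derivative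
        - (exp (- (real n - 2) * e s) * (- (real n - 2) * l s)) / (real n - 2)) (at s within {0..<tB})"
      by (rule DERIV_cdivide[OF DERIV_minus[OF b]])
    have "- (exp (- (real n - 2) * e s) * (- (real n - 2) * l s)) / (real n - 2) = l s * exp ((2 - real n) * e s)"
      using n3 by (simp add: field_simps)
    then show ?thesis using c False by (simp add: G_def[abs_def])
  qed
  define En where "En t = (l t * exp (e t))^2 / 2 + k / real n * cb * (exp (e t))^2 / 2 - k / real n * rho0 * G t" for t
  have dEn: "(En has_real_derivative 0) (at s within {0..<tB})" if s: "s \<in> {0..<tB}" for s
  proof -
    let ?l' = "- ((l s) ^ 2) + k / real n * (rho s - cb)"
    have dl: "(l has_real_derivative ?l') (at s within {0..<tB})" using dlam[OF s one_in] by (simp add: l_def)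
    have de: "(e has_real_derivative l s) (at s within {0..<tB})" using dE[OF s one_in] by (simp add: e_def l_def)
    have dA: "((\<lambda>t. exp (e t)) has_real_derivative exp (e s) * l s) (at s within {0..<tB})"
      by (rule DERIV_chain2[OF DERIV_exp de])
    have dW: "((\<lambda>t. l t * exp (e t)) has_real_derivative l s * (exp (e s) * l s) + ?l' * exp (e s)) (at s within {0..<tB})"
      by (rule DERIV_mult'[OF dl dA])
    have dW2: "((\<lambda>t. (l t * exp (e t))^2 / 2) has_real_derivative
        of_nat 2 * ((l s * (exp (e s) * l s) + ?l' * exp (e s)) * (l s * exp (e s)) ^ (2 - Suc 0)) / 2) (at s within {0..<tB})"
      by (rule DERIV_cdivide[OF DERIV_power[OF dW]])
    have dA2: "((\<lambda>t. k / real n * cb * (exp (e t))^2 / 2) has_real_derivative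
        k / real n * cb * (of_nat 2 * ((exp (e s) * l s) * (exp (e s)) ^ (2 - Suc 0))) / 2) (at s within {0..<tB})"
      by (rule DERIV_cdivide[OF DERIV_cmult[OF DERIV_power[OF dA]]])
    have dG': "((\<lambda>t. k / real n * rho0 * G t) has_real_derivative k / real n * rho0 * (l s * exp ((2 - real n) * e s))) (at s within {0..<tB})"
      by (rule DERIV_cmult[OF dG[OF s]])
    have dsum: "(En has_real_derivative
        of_nat 2 * ((l s * (exp (e s) * l s) + ?l' * exp (e s)) * (l s * exp (e s)) ^ (2 - Suc 0)) / 2
        + k / real n * cb * (of_nat 2 * ((exp (e s) * l s) * (exp (e s)) ^ (2 - Suc 0))) / 2
        - k / real n * rho0 * (l s * exp ((2 - real n) * e s))) (at s within {0..<tB})"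
      unfolding En_def[abs_def] by (rule DERIV_diff[OF DERIV_add[OF dW2 dA2] dG'])
    have "of_nat 2 * ((l s * (exp (e s) * l s) + ?l' * exp (e s)) * (l s * exp (e s)) ^ (2 - Suc 0)) / 2
        + k / real n * cb * (of_nat 2 * ((exp (e s) * l s) * (exp (e s)) ^ (2 - Suc 0))) / 2
        - k / real n * rho0 * (l s * exp ((2 - real n) * e s))
        = k / real n * l s * (rho s * (exp (e s))^2 - rho0 * exp ((2 - real n) * e s))"
      using n2 by (simp add: field_simps power2_eq_square)
    also have "\<dots> = 0" using rho_id[OF s] by simp
    finally show ?thesis using dsum by simp
  qed
  have En_const: "En t = En 0" if "t \<in> {0..<tB}" for t by (rule const0[OF dEn that])
  define K where "K = En 0 / (k / real n * rho0)"
  have cpos: "k / real n * rho0 > 0" using kpos rho0pos n2 by simp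
  have GK: "G t \<ge> - K" if t: "t \<in> {0..<tB}" for t
  proof -
    have "(l t * exp (e t))^2 / 2 + k / real n * cb * (exp (e t))^2 / 2 \<ge> 0"
      using kpos cbpos by simp
    then have "k / real n * rho0 * G t \<ge> - En 0" using En_const[OF t] by (simp add: En_def)
    then have "G t * (k / real n * rho0) \<ge> - K * (k / real n * rho0)"
      using cpos by (simp add: K_def mult.commute)
    then show ?thesis using cpos by (rule mult_right_le_imp_le)
  qed
  define C1 where "C1 = \<bar>K\<bar> * real n"
  have eb: "e t \<ge> - C1" if t: "t \<in> {0..<tB}" for t
  proof (cases "n = 2")
    case True
    then show ?thesis using GK[OF t] by (simp add: G_def C1_def)
  next
    case False
    then have n3: "real n - 2 \<ge> 1" using n2 by simp
    show ?thesis
    proof (cases "e t \<ge> 0")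
      case True
      have kn: "\<bar>K\<bar> * real n \<ge> 0" by simp
      show ?thesis using True kn unfolding C1_def by linarith
    next
      case False
      have "- exp (- (real n - 2) * e t) / (real n - 2) \<ge> - K" using GK[OF t] \<open>n \<noteq> 2\<close> by (simp add: G_def)
      then have "exp (- (real n - 2) * e t) \<le> K * (real n - 2)" using n3 by (simp add: field_simps)
      moreover have "- e t \<le> - (real n - 2) * e t"
      proof -
        have "1 * (- e t) \<le> (real n - 2) * (- e t)" by (rule mult_right_mono[OF n3]) (use False in simp)
        moreover have "(real n - 2) * (- e t) = - (real n - 2) * e t" by (simp add: algebra_simps)
        ultimately show ?thesis by linarith
      qed
      moreover have "- (real n - 2) * e t \<le> exp (- (real n - 2) * e t)"
        using exp_ge_add_one_self[of "- (real n - 2) * e t"] by linarith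
      moreover have "K * (real n - 2) \<le> \<bar>K\<bar> * real n"
      proof -
        have "K * (real n - 2) \<le> \<bar>K\<bar> * (real n - 2)" by (rule mult_right_mono) (use n3 in auto)
        also have "\<dots> \<le> \<bar>K\<bar> * real n" by (rule mult_left_mono) auto
        finally show ?thesis .
      qed
      ultimately show ?thesis by (simp add: C1_def)
    qed
  qed
  have Pb: "P t \<ge> exp (- 2 * C1)" if t: "t \<in> {0..<tB}" for t
  proof -
    have "P t = exp (2 * e t)" using E_eq[OF n_in t] by (simp add: P_def e_def)
    then show ?thesis using eb[OF t] by simp
  qed
  have "\<forall>\<^sub>F t in at_left tB. P t < exp (- 2 * C1)"
    using order_tendstoD(2)[OF P_to_0, of "exp (- 2 * C1)"] by simp
  then have "\<forall>\<^sub>F t in at_left tB. False"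
    using ev_in
  proof eventually_elim
    case (elim t)
    then have "t \<in> {0..<tB}" by simp
    then show ?case using Pb[of t] elim by linarith
  qed
  then show False by simp
qed

end

context sys2 begin

lemma P_le: "\<exists>t1<tB. \<forall>x\<in>{t1<..<tB}. P x \<le> tB - x \<and> x \<in> {0<..<tB}"
proof -
  have "\<forall>\<^sub>F t in at_left tB. dist ((lam 1 t + lam n t) * P t) 0 < 1"
    using tendstoD[OF dP_lim, of 1] by simp
  then have "\<forall>\<^sub>F t in at_left tB. \<bar>(lam 1 t + lam n t) * P t\<bar> \<le> 1 \<and> t \<in> {0<..<tB}"
    using ev_in by eventually_elim auto
  then obtain b where b: "b < tB" "\<And>y. b < y \<Longrightarrow> y < tB \<Longrightarrow> \<bar>(lam 1 y + lam n y) * P y\<bar> \<le> 1 \<and> y \<in> {0<..<tB}"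
    unfolding eventually_at_left_field by blast
  define t1 where "t1 = max 0 b"
  have t1: "t1 < tB" using b tB by (simp add: t1_def)
  define S where "S = {t1<..<tB}"
  have inS: "y \<in> {0<..<tB} \<and> \<bar>(lam 1 y + lam n y) * P y\<bar> \<le> 1" if "y \<in> S" for y
    using b(2)[of y] that by (auto simp: S_def t1_def)
  have lip: "\<bar>P x - P y\<bar> \<le> 1 * \<bar>x - y\<bar>" if "x \<in> S" "y \<in> S" for x y
  proof -
    have "norm (P x - P y) \<le> 1 * norm (x - y)"
    proof (rule field_differentiable_bound[of S P "\<lambda>z. (lam 1 z + lam n z) * P z"])
      show "convex S" by (simp add: S_def)
      show "(P has_field_derivative (lam 1 z + lam n z) * P z) (at z within S)" if "z \<in> S" for z
        using dP_at[of z] inS[OF that] by (simp add: has_field_derivative_at_within)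
      show "norm ((lam 1 z + lam n z) * P z) \<le> 1" if "z \<in> S" for z using inS[OF that] by simp
    qed (use that in auto)
    then show ?thesis by simp
  qed
  have "P x \<le> tB - x \<and> x \<in> {0<..<tB}" if x: "x \<in> S" for x
  proof -
    have "((\<lambda>y. P x - P y) \<longlongrightarrow> P x - 0) (at_left tB)"
      by (intro tendsto_diff tendsto_const P_to_0)
    moreover have "\<forall>\<^sub>F y in at_left tB. P x - P y \<le> tB - x"
    proof -
      have "\<forall>\<^sub>F y in at_left tB. y \<in> {x<..<tB}" using x by (intro eventually_at_left_real) (simp add: S_def)
      then show ?thesis
      proof eventually_elim
        case (elim y)
        then have "y \<in> S" using x by (auto simp: S_def)
        then have "\<bar>P y - P x\<bar> \<le> 1 * \<bar>y - x\<bar>" using lip x by blast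
        then show ?case using elim by auto
      qed
    qed
    ultimately have "P x - 0 \<le> tB - x"
      by (intro tendsto_upperbound) auto
    then show ?thesis using inS[OF x] by simp
  qed
  then show ?thesis using t1 unfolding S_def by blast
qed

definition Lam where "Lam \<theta> t = E 1 t + \<theta> * E n t"

lemma f_eq: "u 1 t * u n t powr \<theta> = exp (Lam \<theta> t)"
  by (simp add: u_eq powr_def Lam_def exp_add)

lemma Lam_lim: "((\<lambda>t. (lam 1 t + \<theta> * lam n t) * P t) \<longlongrightarrow> (\<theta> - 1) * p) (at_left tB)"
proof -
  have "((\<lambda>t. lam 1 t * P t + \<theta> * (lam n t * P t)) \<longlongrightarrow> - p + \<theta> * p) (at_left tB)"
    by (intro tendsto_add tendsto_mult tendsto_const A1 An)
  then show ?thesis by (simp add: algebra_simps)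
qed

lemma ln_lim: "\<forall>\<^sub>F t in at_left tB. ln (tB - t) \<le> Z"
proof -
  have "\<forall>\<^sub>F t in at_left tB. t \<in> {tB - exp Z<..<tB}" by (intro eventually_at_left_real) simp
  then show ?thesis
  proof eventually_elim
    case (elim t)
    then have "0 < tB - t" "tB - t < exp Z" by auto
    then have "ln (tB - t) < ln (exp Z)" by (intro ln_less_cancel_iff[THEN iffD2]) auto
    then show ?case by simp
  qed
qed

lemma Lam_div:
  assumes th: "\<theta> \<noteq> 1"
  defines "\<sigma> \<equiv> (if \<theta> > 1 then 1 else -1 :: real)"
  shows "\<forall>\<^sub>F t in at_left tB. Z \<le> \<sigma> * Lam \<theta> t"
proof -
  define c where "c = \<bar>\<theta> - 1\<bar> * p / 2"
  have c0: "c > 0" using th p_pos by (simp add: c_def)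
  have sl: "\<sigma> * ((\<theta> - 1) * p) = 2 * c" using p_pos by (auto simp: \<sigma>_def c_def)
  have "((\<lambda>t. \<sigma> * ((lam 1 t + \<theta> * lam n t) * P t)) \<longlongrightarrow> \<sigma> * ((\<theta> - 1) * p)) (at_left tB)"
    by (intro tendsto_mult tendsto_const Lam_lim)
  then have "\<forall>\<^sub>F t in at_left tB. \<sigma> * ((lam 1 t + \<theta> * lam n t) * P t) > c"
    using order_tendstoD(1)[of _ "\<sigma> * ((\<theta> - 1) * p)" _ c] sl c0 by simp
  then obtain b where b: "b < tB" "\<And>y. b < y \<Longrightarrow> y < tB \<Longrightarrow> \<sigma> * ((lam 1 y + \<theta> * lam n y) * P y) > c"
    unfolding eventually_at_left_field by blast
  obtain t1 where t1: "t1 < tB" "\<And>x. x \<in> {t1<..<tB} \<Longrightarrow> P x \<le> tB - x \<and> x \<in> {0<..<tB}"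
    using P_le by blast
  define t2 where "t2 = max b t1"
  have t2: "t2 < tB" using b t1 by (simp add: t2_def)
  define t3 where "t3 = (t2 + tB) / 2"
  have t3: "t2 < t3" "t3 < tB" using t2 by (auto simp: t3_def)
  have good: "x \<in> {0<..<tB} \<and> P x \<le> tB - x \<and> \<sigma> * ((lam 1 x + \<theta> * lam n x) * P x) > c" if "t2 < x" "x < tB" for x
    using b(2)[of x] t1(2)[of x] that by (auto simp: t2_def)
  define psi where "psi t = \<sigma> * Lam \<theta> t + c * ln (tB - t)" for t
  have mono: "psi t3 \<le> psi t" if "t3 \<le> t" "t < tB" for t
  proof (rule DERIV_nonneg_imp_nondecreasing[OF that(1)])
    fix x assume x: "t3 \<le> x" "x \<le> t"
    then have g: "x \<in> {0<..<tB} \<and> P x \<le> tB - x \<and> \<sigma> * ((lam 1 x + \<theta> * lam n x) * P x) > c"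
      using good[of x] t3 that by auto
    have dl: "((\<lambda>t. ln (tB - t)) has_real_derivative 1 / (tB - x) * (0 - 1)) (at x)"
      by (rule DERIV_chain2[OF DERIV_ln_divide DERIV_diff[OF DERIV_const DERIV_ident]]) (use g in auto)
    have dL: "(Lam \<theta> has_real_derivative lam 1 x + \<theta> * lam n x) (at x)"
      unfolding Lam_def[abs_def]
      by (rule DERIV_add[OF dE_at[OF _ one_in] DERIV_cmult[OF dE_at[OF _ n_in]]]) (use g in auto)
    have dpsi: "(psi has_real_derivative \<sigma> * (lam 1 x + \<theta> * lam n x) + c * (1 / (tB - x) * (0 - 1))) (at x)"
      unfolding psi_def[abs_def] by (rule DERIV_add[OF DERIV_cmult[OF dL] DERIV_cmult[OF dl]])
    have Pp: "P x > 0" by (rule P_pos)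
    have "\<sigma> * (lam 1 x + \<theta> * lam n x) > c / P x"
      using g Pp by (simp add: field_simps)
    moreover have "c / P x \<ge> c / (tB - x)"
      using g Pp c0 by (intro divide_left_mono) auto
    ultimately have "\<sigma> * (lam 1 x + \<theta> * lam n x) + c * (1 / (tB - x) * (0 - 1)) \<ge> 0" by simp
    then show "\<exists>y. DERIV psi x :> y \<and> y \<ge> 0" using dpsi by blast
  qed
  define A where "A = psi t3"
  have "\<forall>\<^sub>F t in at_left tB. t \<in> {t3<..<tB}" using t3 by (intro eventually_at_left_real) simp
  moreover have "\<forall>\<^sub>F t in at_left tB. ln (tB - t) \<le> (A - Z) / c" by (rule ln_lim)
  ultimately show ?thesis
  proof eventually_elim
    case (elim t)
    then have "A \<le> psi t" using mono[of t] by (auto simp: A_def)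
    moreover have "c * ln (tB - t) \<le> A - Z" using elim c0 by (simp add: field_simps)
    ultimately show ?case by (simp add: psi_def)
  qed
qed

end

theorem lemma5p1:
  fixes n J :: nat and k cb rho0 tB p q :: real
    and lam0 :: "nat \<Rightarrow> real"
    and lam :: "nat \<Rightarrow> real \<Rightarrow> real" and rho :: "real \<Rightarrow> real"
    and u :: "nat \<Rightarrow> real \<Rightarrow> real"
  assumes n2: "n \<ge> 2" and kpos: "k > 0" and cbpos: "cb > 0" and rho0pos: "rho0 > 0"
    and J: "1 \<le> J" "J \<le> n"
    and eqJ: "\<forall>i\<in>{1..J}. lam0 i = lam0 1"
    and gapJ: "J < n \<longrightarrow> lam0 J < lam0 (J + 1)"
    and ordJ: "\<forall>i j. J + 1 \<le> i \<and> i \<le> j \<and> j \<le> n \<longrightarrow> lam0 i \<le> lam0 j"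
    and sol: "maximal_solution n k cb rho0 lam0 tB lam rho"
    and tB: "0 < tB"
    and u_def: "\<And>i t. u i t = exp (integral {0..t} (lam i))"
    and p: "((\<lambda>t. deriv (u 1) t * u n t) \<longlongrightarrow> - p) (at_left tB)"
    and q: "((\<lambda>t. u 1 t * deriv (u n) t) \<longlongrightarrow> q) (at_left tB)"
    and pq: "p = q"
  shows "(\<forall>\<theta>::real. \<theta> \<le> 1 \<longrightarrow> ((\<lambda>t. u 1 t * u n t powr \<theta>) \<longlongrightarrow> 0) (at_left tB)) \<and>
         (\<forall>\<theta>::real. \<theta> > 1 \<longrightarrow>
            (\<forall>L. ((\<lambda>t. u 1 t * u n t powr \<theta>) \<longlongrightarrow> L) (at_left tB) \<longrightarrow> L = 0))"
proof -
  have s1: "is_solution n k cb rho0 lam0 tB lam rho"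
    and s2: "\<not> (\<exists>T > tB. \<exists>lam' rho'. is_solution n k cb rho0 lam0 T lam' rho')"
    using sol unfolding maximal_solution_def by auto
  interpret S: sys2 n k cb rho0 tB lam0 lam rho J p q u
    by (rule sys2.intro[OF sys.intro[OF s1 tB] sys2_axioms.intro[OF n2 kpos cbpos rho0pos J eqJ gapJ ordJ s2 u_def p q pq]])
  have fq: "(\<lambda>t. u 1 t * u n t powr \<theta>) = (\<lambda>t. exp (S.Lam \<theta> t))" for \<theta>
    by (rule ext) (rule S.f_eq)
  show ?thesis unfolding fq
  proof (intro conjI allI impI)
    fix \<theta> :: real assume th: "\<theta> \<le> 1"
    show "((\<lambda>t. exp (S.Lam \<theta> t)) \<longlongrightarrow> 0) (at_left tB)"
    proof (cases "\<theta> = 1")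
      case True
      have "(\<lambda>t. exp (S.Lam \<theta> t)) = S.P"
        by (rule ext) (simp add: S.Lam_def S.P_def True)
      then show ?thesis using S.P_to_0 by simp
    next
      case False
      then have ev: "\<forall>\<^sub>F t in at_left tB. Z \<le> - S.Lam \<theta> t" for Z
        using S.Lam_div[OF False, of Z] th by simp
      have "filterlim (\<lambda>t. - S.Lam \<theta> t) at_top (at_left tB)"
        unfolding filterlim_at_top using ev by blast
      then have "filterlim (S.Lam \<theta>) at_bot (at_left tB)"
        using filterlim_uminus_at_top[of "\<lambda>t. - S.Lam \<theta> t"] by simp
      then have "((\<lambda>t. exp (S.Lam \<theta> t)) \<longlongrightarrow> 0) (at_left tB)"
        by (rule filterlim_compose[OF exp_at_bot])
      then show ?thesis .
    qed
  next
    fix \<theta> :: real and L assume th: "\<theta> > 1"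
      and lim: "((\<lambda>t. exp (S.Lam \<theta> t)) \<longlongrightarrow> L) (at_left tB)"
    have ev1: "\<forall>\<^sub>F t in at_left tB. ln (\<bar>L\<bar> + 1) \<le> S.Lam \<theta> t"
      using S.Lam_div[of \<theta> "ln (\<bar>L\<bar> + 1)"] th by simp
    have ev2: "\<forall>\<^sub>F t in at_left tB. dist (exp (S.Lam \<theta> t)) L < 1"
      using tendstoD[OF lim, of 1] by simp
    have "\<forall>\<^sub>F t in at_left tB. False"
      using ev1 ev2
    proof eventually_elim
      case (elim t)
      have a: "exp (ln (\<bar>L\<bar> + 1)) \<le> exp (S.Lam \<theta> t)" using elim(1) by (simp only: exp_le_cancel_iff)
      have b: "exp (ln (\<bar>L\<bar> + 1)) = \<bar>L\<bar> + 1"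
        by (rule exp_ln) (simp add: add_nonneg_pos)
      have "\<bar>L\<bar> + 1 \<le> exp (S.Lam \<theta> t)" using a b by linarith
      moreover have "exp (S.Lam \<theta> t) < L + 1" using elim(2) by (simp add: dist_real_def abs_less_iff)
      ultimately show False by linarith
    qed
    then show "L = 0" by simp
  qed
qed

end
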